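(* For every composition $\alpha$, the number of maximal chains from the empty composition $\varnothing$ to $\alpha$ in the poset $\mathcal{R}_c$ (that is, the number of sequences $\varnothing=\alpha^{(0)}\lessdot_r\alpha^{(1)}\lessdot_r\cdots\lessdot_r\alpha^{(n)}=\alpha$) equals the number of standard reverse composition tableaux of shape $\alpha$.
   Context: Compositions have positive parts; $\varnothing$ is the empty composition. Operators: for $i\geq1$, $\mathfrak{d}_i(\alpha)$ subtracts $1$ from the rightmost part of $\alpha$ equal to $i$ (deleting a resulting $0$), and is $0$ if there is no such part; operators send $0$ to $0$. $\mathfrak{v}_{[i-1]}=\mathfrak{d}_1\cdots\mathfrak{d}_{i-1}$ ($\mathfrak{d}_{i-1}$ applied first; $\mathfrak{v}_{[0]}=\mathrm{id}$), $a_i$ appends a part $i$ at the end, $u_i=a_i\mathfrak{v}_{[i-1]}$. The poset $\mathcal{R}_c$ on compositions has cover relation $\alpha\lessdot_r\beta$ iff $\beta=u_i(\alpha)$ for some $i\geq1$, and its order is the transitive closure. An SRCT of shape $\alpha\vDash m$ (reverse composition diagram: row $r$ from the top has $\alpha_r$ left-justified boxes) is a bijective filling $\tau$ by $\{1,\ldots,m\}$ with rows decreasing left to right, first column increasing top to bottom, and such that for rows $r<s$ and column $c$ with $(s,c+1)$ a box, if $\tau(r,c)>\tau(s,c+1)$ then $(r,c+1)$ is a box and $\tau(r,c+1)>\tau(s,c+1)$. *)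

theory Defs
  imports Main
begin

definition is_composition :: "nat list \<Rightarrow> bool" where
  "is_composition \<alpha> \<longleftrightarrow> (\<forall>p\<in>set \<alpha>. 0 < p)"

text \<open>Operators act on nat list option; None plays the role of the zero element 0.\<close>

definition rightmost_idx :: "nat \<Rightarrow> nat list \<Rightarrow> nat option" where
  "rightmost_idx i \<alpha> =
     (if i \<in> set \<alpha> then Some (last (filter (\<lambda>j. \<alpha> ! j = i) [0..<length \<alpha>])) else None)"

definition dop :: "nat \<Rightarrow> nat list option \<Rightarrow> nat list option" where
  "dop i x = (case x of None \<Rightarrow> None
     | Some \<alpha> \<Rightarrow> (case rightmost_idx i \<alpha> of None \<Rightarrow> None
        | Some j \<Rightarrow> Some (if \<alpha> ! j = 1 then take j \<alpha> @ drop (Suc j) \<alpha>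
                          else \<alpha>[j := \<alpha> ! j - 1])))"

text \<open>vop k = d_1 d_2 ... d_k (d_k applied first); vop 0 = id. So v_[i-1] = vop (i-1).\<close>
fun vop :: "nat \<Rightarrow> nat list option \<Rightarrow> nat list option" where
  "vop 0 = id"
| "vop (Suc k) = vop k \<circ> dop (Suc k)"

definition aop :: "nat \<Rightarrow> nat list option \<Rightarrow> nat list option" where
  "aop i = map_option (\<lambda>\<alpha>. \<alpha> @ [i])"

definition uop :: "nat \<Rightarrow> nat list option \<Rightarrow> nat list option" where
  "uop i = aop i \<circ> vop (i - 1)"

definition covers_r :: "nat list \<Rightarrow> nat list \<Rightarrow> bool" where
  "covers_r \<alpha> \<beta> \<longleftrightarrow> (\<exists>i\<ge>1. uop i (Some \<alpha>) = Some \<beta>)"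

definition chains_to :: "nat list \<Rightarrow> nat list list set" where
  "chains_to \<alpha> = {cs. cs \<noteq> [] \<and> hd cs = [] \<and> last cs = \<alpha> \<and>
       (\<forall>k. Suc k < length cs \<longrightarrow> covers_r (cs ! k) (cs ! Suc k))}"

text \<open>Cells of the reverse composition diagram, 0-indexed: (row, column).\<close>
definition cells :: "nat list \<Rightarrow> (nat \<times> nat) set" where
  "cells \<alpha> = {(r, c). r < length \<alpha> \<and> c < \<alpha> ! r}"

definition is_SRCT :: "nat list \<Rightarrow> (nat \<times> nat \<Rightarrow> nat) \<Rightarrow> bool" where
  "is_SRCT \<alpha> \<tau> \<longleftrightarrow>
     bij_betw \<tau> (cells \<alpha>) {1..sum_list \<alpha>} \<and>
     (\<forall>r c c'. (r, c') \<in> cells \<alpha> \<and> c < c' \<longrightarrow> \<tau> (r, c) > \<tau> (r, c')) \<and>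
     (\<forall>r s. r < s \<and> s < length \<alpha> \<longrightarrow> \<tau> (r, 0) < \<tau> (s, 0)) \<and>
     (\<forall>r s c. r < s \<and> (s, Suc c) \<in> cells \<alpha> \<and> (r, c) \<in> cells \<alpha> \<and> \<tau> (r, c) > \<tau> (s, Suc c)
        \<longrightarrow> (r, Suc c) \<in> cells \<alpha> \<and> \<tau> (r, Suc c) > \<tau> (s, Suc c))"

text \<open>SRCTs as functions that vanish outside the diagram (so each tableau is counted once).\<close>
definition SRCTs :: "nat list \<Rightarrow> (nat \<times> nat \<Rightarrow> nat) set" where
  "SRCTs \<alpha> = {\<tau>. is_SRCT \<alpha> \<tau> \<and> (\<forall>x. x \<notin> cells \<alpha> \<longrightarrow> \<tau> x = 0)}"

end

theory Submission
  imports Defs "HOL-Library.Multiset"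
begin

lemma rightmost_idx_snoc:
  "rightmost_idx k (g @ [x]) = (if x = k then Some (length g) else rightmost_idx k g)"
proof -
  have f: "filter (\<lambda>j. (g @ [x]) ! j = k) [0..<length g] = filter (\<lambda>j. g ! j = k) [0..<length g]"
    by (rule filter_cong) (auto simp: nth_append)
  show ?thesis
    using f by (auto simp: rightmost_idx_def nth_append in_set_conv_nth)
qed

lemma rightmost_idx_lt: "rightmost_idx k g = Some j \<Longrightarrow> j < length g \<and> g ! j = k"
proof -
  assume a: "rightmost_idx k g = Some j"
  hence k: "k \<in> set g" by (auto simp: rightmost_idx_def split: if_splits)
  hence ne: "filter (\<lambda>j. g ! j = k) [0..<length g] \<noteq> []"
    by (auto simp: filter_empty_conv in_set_conv_nth)
  have "j = last (filter (\<lambda>j. g ! j = k) [0..<length g])" using a k by (auto simp: rightmost_idx_def)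
  hence "j \<in> set (filter (\<lambda>j. g ! j = k) [0..<length g])" using last_in_set[OF ne] by simp
  thus ?thesis by simp
qed

lemma dop_Nil: "dop k (Some []) = None"
  by (simp add: dop_def rightmost_idx_def)

lemma dop_None[simp]: "dop k None = None"
  by (simp add: dop_def)

lemma dop_snoc:
  "dop k (Some (g @ [x])) = (if x = k then Some (if k = 1 then g else g @ [k - 1])
      else map_option (\<lambda>y. y @ [x]) (dop k (Some g)))"
proof (cases "x = k")
  case True
  thus ?thesis by (simp add: dop_def rightmost_idx_snoc)
next
  case False
  show ?thesis
  proof (cases "rightmost_idx k g")
    case None
    thus ?thesis using False by (simp add: dop_def rightmost_idx_snoc)
  next
    case (Some j)
    with rightmost_idx_lt have j: "j < length g" "g ! j = k" by auto
    thus ?thesis using False Some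
      by (auto simp: dop_def rightmost_idx_snoc nth_append list_update_append)
  qed
qed

lemma dop_some_iff: "dop k (Some b) \<noteq> None \<longleftrightarrow> k \<in> set b"
  by (induction b rule: rev_induct) (auto simp: dop_Nil dop_snoc)

lemma dop_facts:
  "dop k (Some b) = Some g \<Longrightarrow> 1 \<le> k \<Longrightarrow>
     k \<in> set b \<and> (2 \<le> k \<longrightarrow> k - 1 \<in> set g) \<and> (\<forall>v. v \<in> set b \<longrightarrow> v \<noteq> k \<longrightarrow> v \<in> set g)
     \<and> (\<forall>v. v \<in> set g \<longrightarrow> v \<noteq> k - 1 \<longrightarrow> v \<in> set b) \<and> Suc (sum_list g) = sum_list b"
proof (induction b arbitrary: g rule: rev_induct)
  case Nil thus ?case by (simp add: dop_Nil)
next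
  case (snoc x xs)
  show ?case
  proof (cases "x = k")
    case True
    thus ?thesis using snoc.prems by (auto simp: dop_snoc split: if_splits)
  next
    case False
    then obtain g' where g': "dop k (Some xs) = Some g'" "g = g' @ [x]"
      using snoc.prems by (auto simp: dop_snoc)
    show ?thesis using snoc.IH[OF g'(1)] snoc.prems g' False by auto
  qed
qed

definition om :: "'a option \<Rightarrow> 'a multiset" where
  "om x = (case x of None \<Rightarrow> {#} | Some a \<Rightarrow> {#a#})"

definition liftm :: "('a \<Rightarrow> 'b option) \<Rightarrow> 'a multiset \<Rightarrow> 'b multiset" where
  "liftm f M = sum_mset (image_mset (\<lambda>x. om (f x)) M)"

lemma om_simps[simp]: "om None = {#}" "om (Some a) = {#a#}"
  by (simp_all add: om_def)

lemma liftm_empty[simp]: "liftm f {#} = {#}" by (simp add: liftm_def)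
lemma liftm_add[simp]: "liftm f (M + N) = liftm f M + liftm f N" by (simp add: liftm_def)
lemma liftm_add_mset[simp]: "liftm f (add_mset a M) = om (f a) + liftm f M" by (simp add: liftm_def)
lemma liftm_single[simp]: "liftm f {#a#} = om (f a)" by (simp add: liftm_def)
lemma liftm_image[simp]: "liftm f (image_mset g M) = liftm (\<lambda>x. f (g x)) M"
  by (induction M) auto
lemma om_map: "om (map_option h x) = image_mset h (om x)" by (cases x) auto
lemma liftm_map: "liftm (\<lambda>x. map_option h (f x)) M = image_mset h (liftm f M)"
  by (induction M) (auto simp: om_map)
lemma liftm_Some[simp]: "liftm Some M = M" by (induction M) auto
lemma liftm_comp:
  "liftm (\<lambda>y. case f y of None \<Rightarrow> None | Some z \<Rightarrow> g z) M = liftm g (liftm f M)"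
  by (induction M) (auto split: option.splits)
lemma liftm_cong: "(\<And>x. x \<in># M \<Longrightarrow> f x = g x) \<Longrightarrow> liftm f M = liftm g M"
  unfolding liftm_def by (metis image_mset_cong)

definition Lup :: "nat list \<Rightarrow> nat list multiset" where
  "Lup b = {#1 # b#} + mset (map (\<lambda>r. b[r := Suc (b!r)])
       (filter (\<lambda>r. b!r \<notin> set (take r b)) [0..<length b]))"

definition LupO :: "nat list option \<Rightarrow> nat list multiset" where
  "LupO x = (case x of None \<Rightarrow> {#} | Some b \<Rightarrow> Lup b)"

lemma LupO_simps[simp]: "LupO None = {#}" "LupO (Some b) = Lup b"
  by (simp_all add: LupO_def)

lemma Lup_Nil: "Lup [] = {#[1]#}" by (simp add: Lup_def)

lemma Lup_snoc:
  "Lup (g @ [x]) = image_mset (\<lambda>y. y @ [x]) (Lup g)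
     + (if x \<in> set g then {#} else {#g @ [Suc x]#})"
proof -
  let ?P = "\<lambda>r. g!r \<notin> set (take r g)"
  let ?Q = "\<lambda>r. (g@[x])!r \<notin> set (take r (g@[x]))"
  have f: "filter ?Q [0..<length g] = filter ?P [0..<length g]"
    by (rule filter_cong) (auto simp: nth_append)
  have m: "map (\<lambda>r. (g@[x])[r := Suc ((g@[x])!r)]) (filter ?P [0..<length g])
     = map (\<lambda>y. y @ [x]) (map (\<lambda>r. g[r := Suc (g!r)]) (filter ?P [0..<length g]))"
    by (auto simp: nth_append list_update_append)
  have u: "[0..<length (g@[x])] = [0..<length g] @ [length g]" by simp
  have q: "?Q (length g) = (x \<notin> set g)" by simp
  have l: "(g@[x])[length g := Suc ((g@[x]) ! length g)] = g @ [Suc x]" by (simp add: list_update_append)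
  have "map (\<lambda>r. (g@[x])[r := Suc ((g@[x])!r)]) (filter ?Q [0..<length (g@[x])])
     = map (\<lambda>y. y @ [x]) (map (\<lambda>r. g[r := Suc (g!r)]) (filter ?P [0..<length g]))
       @ (if x \<in> set g then [] else [g @ [Suc x]])"
    unfolding u filter_append f using m q l by simp
  hence "mset (map (\<lambda>r. (g@[x])[r := Suc ((g@[x])!r)]) (filter ?Q [0..<length (g@[x])]))
     = image_mset (\<lambda>y. y @ [x]) (mset (map (\<lambda>r. g[r := Suc (g!r)]) (filter ?P [0..<length g])))
       + (if x \<in> set g then {#} else {#g @ [Suc x]#})"
    by (simp only: mset_append mset_map) auto
  thus ?thesis unfolding Lup_def by simp
qed

lemma liftm_map_id: "liftm (\<lambda>y. Some (h y)) M = image_mset h M"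
  by (induction M) auto

lemma D1:
  assumes k: "1 \<le> k"
  shows "0 \<notin> set b \<Longrightarrow> liftm (\<lambda>y. dop k (Some y)) (Lup b)
          + (if k \<in> set b \<and> \<not>(k = 1 \<or> k - 1 \<in> set b) then {#b#} else {#})
       = LupO (dop k (Some b))
          + (if (k = 1 \<or> k - 1 \<in> set b) \<and> k \<notin> set b then {#b#} else {#})"
proof (induction b rule: rev_induct)
  case Nil
  show ?case using k by (auto simp: Lup_Nil dop_snoc[of _ "[]", simplified] dop_Nil)
next
  case (snoc x g)
  let ?d = "\<lambda>y. dop k (Some y)"
  show ?case
  proof (cases "x = k")
    case True
    have a: "liftm ?d (image_mset (\<lambda>y. y @ [x]) (Lup g))
        = image_mset (\<lambda>y. if k = 1 then y else y @ [k - 1]) (Lup g)"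
      using True by (simp add: dop_snoc liftm_map_id)
    have b: "liftm ?d (if x \<in> set g then {#} else {#g @ [Suc x]#}) = {#}"
    proof -
      have "k \<notin> set g \<Longrightarrow> dop k (Some g) = None" using dop_some_iff by blast
      thus ?thesis using True k by (auto simp: dop_snoc)
    qed
    have c: "liftm ?d (Lup (g @ [x])) = image_mset (\<lambda>y. if k = 1 then y else y @ [k - 1]) (Lup g)"
      by (simp only: Lup_snoc liftm_add a b) simp
    show ?thesis
    proof (cases "k = 1")
      case True
      thus ?thesis using c \<open>x = k\<close> by (simp add: dop_snoc)
    next
      case False
      hence ne: "k - 1 \<noteq> k" using k by simp
      show ?thesis using c \<open>x = k\<close> False ne by (auto simp: Lup_snoc dop_snoc)
    qed
  next
    case False
    define X where "X = image_mset (\<lambda>y. y @ [x]) (liftm ?d (Lup g))"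
    have a: "liftm ?d (image_mset (\<lambda>y. y @ [x]) (Lup g)) = X"
      using False unfolding X_def by (simp add: dop_snoc liftm_map)
    have c: "liftm ?d (Lup (g @ [x])) = X + liftm ?d (if x \<in> set g then {#} else {#g @ [Suc x]#})"
      by (simp only: Lup_snoc liftm_add a)
    have IH' : "X + (if k \<in> set g \<and> \<not>(k = 1 \<or> k - 1 \<in> set g) then {#g @ [x]#} else {#})
       = image_mset (\<lambda>y. y @ [x]) (LupO (dop k (Some g)))
          + (if (k = 1 \<or> k - 1 \<in> set g) \<and> k \<notin> set g then {#g @ [x]#} else {#})"
      unfolding X_def using snoc.prems arg_cong[OF snoc.IH, of "image_mset (\<lambda>y. y @ [x])"] by (auto split: if_splits)
    show ?thesis
    proof (cases "dop k (Some g)")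
      case None
      hence kg: "k \<notin> set g" using dop_some_iff by blast
      have d: "dop k (Some (g @ [x])) = None" using None False by (simp add: dop_snoc)
      have e: "liftm ?d (if x \<in> set g then {#} else {#g @ [Suc x]#})
             = (if x \<notin> set g \<and> Suc x = k then {#g @ [x]#} else {#})"
        using None False snoc.prems by (auto simp: dop_snoc)
      show ?thesis using IH' None kg d e False snoc.prems
        by (auto simp: c split: if_splits)
    next
      case (Some g')
      note F = dop_facts[OF Some k]
      have d: "dop k (Some (g @ [x])) = Some (g' @ [x])" using Some False by (simp add: dop_snoc)
      have e: "liftm ?d (if x \<in> set g then {#} else {#g @ [Suc x]#})
             = (if x \<notin> set g then (if Suc x = k then {#g @ [x]#} else {#g' @ [Suc x]#}) else {#})"
        using Some False snoc.prems by (auto simp: dop_snoc)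
      have xg: "Suc x \<noteq> k \<Longrightarrow> (x \<in> set g' \<longleftrightarrow> x \<in> set g)" using F False by auto
      have xg2: "Suc x = k \<Longrightarrow> x \<in> set g'" using F snoc.prems by auto
      have kg: "k \<in> set g" using F by blast
      have x0: "x \<noteq> 0" using snoc.prems by simp
      show ?thesis
      proof (cases "Suc x = k")
        case True
        have "x \<in> set g'" using xg2 True by blast
        moreover have "k - 1 = x" using True by simp
        ultimately show ?thesis using IH' d e False kg True x0 Some
          by (cases "x \<in> set g") (simp_all add: c Lup_snoc[of g' x])
      next
        case F2: False
        have xx: "x \<in> set g' \<longleftrightarrow> x \<in> set g" using xg F2 by blast
        have k1: "k - 1 \<noteq> x" using F2 k by auto
        let ?E = "(if k \<in> set g \<and> \<not>(k = 1 \<or> k - 1 \<in> set g) then {#g @ [x]#} else {#})"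
        have L: "liftm ?d (Lup (g @ [x])) = X + (if x \<in> set g then {#} else {#g' @ [Suc x]#})"
          using c e F2 by simp
        have I: "X + ?E = image_mset (\<lambda>y. y @ [x]) (Lup g')" using IH' Some kg by simp
        have R: "Lup (g' @ [x]) = image_mset (\<lambda>y. y @ [x]) (Lup g') + (if x \<in> set g then {#} else {#g' @ [Suc x]#})"
          using Lup_snoc[of g' x] xx by simp
        have P: "(k = 1 \<or> k - 1 \<in> set (g @ [x])) = (k = 1 \<or> k - 1 \<in> set g)" using k1 by auto
        have "liftm ?d (Lup (g @ [x])) + ?E = LupO (dop k (Some (g @ [x])))"
          using L I R d by (simp add: ac_simps)
        thus ?thesis using P kg by simp
      qed
    qed
  qed
qed

lemma dop_no0: "dop k (Some b) = Some g \<Longrightarrow> 1 \<le> k \<Longrightarrow> 0 \<notin> set b \<Longrightarrow> 0 \<notin> set g"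
proof (induction b arbitrary: g rule: rev_induct)
  case Nil thus ?case by (simp add: dop_Nil)
next
  case (snoc x xs)
  thus ?case by (cases "x = k") (auto simp: dop_snoc split: if_splits)
qed

fun ww :: "nat \<Rightarrow> nat list \<Rightarrow> nat list option" where
  "ww 0 b = Some b"
| "ww (Suc k) b = (case dop (Suc k) (Some b) of None \<Rightarrow> None | Some g \<Rightarrow> ww k g)"

lemma vop_None: "vop k None = None"
  by (induction k) auto

lemma vop_ww: "vop k (Some b) = ww k b"
proof (induction k arbitrary: b)
  case 0 thus ?case by simp
next
  case (Suc k)
  thus ?case by (cases "dop (Suc k) (Some b)") (auto simp: vop_None)
qed

lemma ww_facts:
  "ww k b = Some g \<Longrightarrow> (1 \<le> k \<longrightarrow> k \<in> set b) \<and> (\<forall>v. k < v \<longrightarrow> (v \<in> set g \<longleftrightarrow> v \<in> set b))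
     \<and> (0 \<notin> set b \<longrightarrow> 0 \<notin> set g) \<and> sum_list g + k = sum_list b"
proof (induction k arbitrary: b)
  case 0 thus ?case by simp
next
  case (Suc k)
  then obtain g1 where g1: "dop (Suc k) (Some b) = Some g1" "ww k g1 = Some g"
    by (cases "dop (Suc k) (Some b)") auto
  note F = dop_facts[OF g1(1)]
  note I = Suc.IH[OF g1(2)]
  have z: "0 \<notin> set b \<longrightarrow> 0 \<notin> set g" using dop_no0[OF g1(1)] I by auto
  show ?case using F I z by auto
qed

lemma liftm_if: "liftm f (if c then {#a#} else {#}) = (if c then om (f a) else {#})" by simp

lemma W:
  "0 \<notin> set b \<Longrightarrow> liftm (ww (Suc n)) (Lup b) = LupO (ww (Suc n) b)
     + (if Suc n \<notin> set b \<and> (n = 0 \<or> n \<in> set b) then om (ww n b) else {#})"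
proof (induction n arbitrary: b)
  case 0
  have e: "ww (Suc 0) = (\<lambda>y. dop 1 (Some y))" by (rule ext, case_tac "dop 1 (Some y)") auto
  show ?case unfolding e using D1[of 1 b] 0 by simp
next
  case (Suc n)
  let ?k = "Suc (Suc n)"
  let ?d = "\<lambda>y. dop ?k (Some y)"
  have cmp: "liftm (ww ?k) M = liftm (ww (Suc n)) (liftm ?d M)" for M
  proof -
    have "ww ?k = (\<lambda>y. case ?d y of None \<Rightarrow> None | Some z \<Rightarrow> ww (Suc n) z)" by (rule ext) simp
    thus ?thesis by (simp only: liftm_comp)
  qed
  have D: "liftm ?d (Lup b) + (if ?k \<in> set b \<and> Suc n \<notin> set b then {#b#} else {#})
       = LupO (?d b) + (if Suc n \<in> set b \<and> ?k \<notin> set b then {#b#} else {#})"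
    using D1[of ?k b] Suc.prems by simp
  have D': "liftm (ww (Suc n)) (liftm ?d (Lup b)) + (if ?k \<in> set b \<and> Suc n \<notin> set b then om (ww (Suc n) b) else {#})
      = liftm (ww (Suc n)) (LupO (?d b)) + (if Suc n \<in> set b \<and> ?k \<notin> set b then om (ww (Suc n) b) else {#})"
    using arg_cong[OF D, of "liftm (ww (Suc n))"] by (simp only: liftm_add liftm_if)
  have B: "Suc n \<notin> set b \<Longrightarrow> ww (Suc n) b = None"
    using ww_facts[of "Suc n" b] by (cases "ww (Suc n) b") auto
  have M: "liftm (ww (Suc n)) (LupO (?d b)) = LupO (ww ?k b)"
  proof (cases "?d b")
    case None thus ?thesis by simp
  next
    case (Some g)
    note F = dop_facts[OF Some]
    have g0: "0 \<notin> set g" using dop_no0[OF Some] Suc.prems by simp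
    have "Suc n \<in> set g" using F by simp
    moreover have "ww ?k b = ww (Suc n) g" using Some by simp
    ultimately show ?thesis using Suc.IH[OF g0] Some by (simp del: ww.simps)
  qed
  show ?case
  proof (cases "Suc n \<in> set b")
    case True
    thus ?thesis unfolding cmp using D' M by (cases "?k \<in> set b") (simp_all del: ww.simps)
  next
    case False
    have z: "om (ww (Suc n) b) = {#}" using B[OF False] by simp
    have z2: "(if ?k \<in> set b \<and> Suc n \<notin> set b then om (ww (Suc n) b) else {#}) = {#}" using z by simp
    have z3: "(if Suc n \<in> set b \<and> ?k \<notin> set b then om (ww (Suc n) b) else {#}) = {#}" using False by simp
    have "liftm (ww (Suc n)) (liftm ?d (Lup b)) = liftm (ww (Suc n)) (LupO (?d b))"
      using D' unfolding z2 z3 add_0_right .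
    hence "liftm (ww (Suc n)) (liftm ?d (Lup b)) = LupO (ww ?k b)" using M by simp
    thus ?thesis unfolding cmp using False by simp
  qed
qed

definition Ub :: "nat \<Rightarrow> nat list \<Rightarrow> nat list multiset" where
  "Ub N b = (\<Sum>i\<in>{1..<N}. om (uop i (Some b)))"

lemma uop_ww: "uop i (Some b) = map_option (\<lambda>g. g @ [i]) (ww (i - 1) b)"
  by (simp add: uop_def aop_def vop_ww)

lemma sum_mset_image_sum:
  "sum_mset (image_mset (\<lambda>y. \<Sum>i\<in>I. f i y) M) = (\<Sum>i\<in>I. sum_mset (image_mset (f i) M))"
  by (induction M) (auto simp: sum.distrib)

lemma sum_mset_image_Sum:
  "finite I \<Longrightarrow> sum_mset (image_mset g (\<Sum>i\<in>I. M i)) = (\<Sum>i\<in>I. sum_mset (image_mset g (M i)))"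
  by (induction I rule: finite_induct) auto

lemma shift_sum:
  fixes X Y :: "nat \<Rightarrow> 'a::comm_monoid_add"
  assumes "Y 1 = 0" "\<And>i. 1 \<le> i \<Longrightarrow> Y (Suc i) = X i"
  shows "(\<Sum>i\<in>{1..<Suc M}. Y i) = (\<Sum>i\<in>{1..<M}. X i)"
proof (induction M)
  case 0 thus ?case by simp
next
  case (Suc M)
  show ?case
  proof (cases "M = 0")
    case True thus ?thesis using assms(1) by simp
  next
    case False
    have "(\<Sum>i\<in>{1..<Suc (Suc M)}. Y i) = (\<Sum>i\<in>{1..<Suc M}. Y i) + Y (Suc M)"
      by simp
    also have "\<dots> = (\<Sum>i\<in>{1..<M}. X i) + X M" using Suc.IH assms(2)[of M] False by simp
    also have "\<dots> = (\<Sum>i\<in>{1..<Suc M}. X i)" using False by simp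
    finally show ?thesis .
  qed
qed

lemma comm:
  assumes b0: "0 \<notin> set b" and N: "sum_list b + 3 \<le> N"
  shows "sum_mset (image_mset (Ub N) (Lup b)) = sum_mset (image_mset Lup (Ub N b))"
proof -
  define T where "T i = image_mset (\<lambda>y. y @ [i]) (LupO (ww (i - 1) b))" for i
  define Y where "Y i = (case i of Suc (Suc n) \<Rightarrow>
      (if Suc n \<notin> set b \<and> (n = 0 \<or> n \<in> set b) then image_mset (\<lambda>y. y @ [i]) (om (ww n b)) else {#})
      | _ \<Rightarrow> {#})" for i
  define X where "X i = (case ww (i - 1) b of None \<Rightarrow> {#}
      | Some g \<Rightarrow> (if i \<notin> set g then {#g @ [Suc i]#} else {#}))" for i
  have L: "sum_mset (image_mset (\<lambda>y. om (uop i (Some y))) (Lup b)) = T i + Y i" if i: "1 \<le> i" for i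
  proof -
    have "sum_mset (image_mset (\<lambda>y. om (uop i (Some y))) (Lup b))
        = image_mset (\<lambda>y. y @ [i]) (liftm (ww (i - 1)) (Lup b))"
      using liftm_map[of "\<lambda>g. g @ [i]" "ww (i - 1)" "Lup b"] by (simp add: liftm_def uop_ww)
    also have "\<dots> = T i + Y i"
    proof (cases "i - 1")
      case 0
      hence "i = 1" using i by simp
      have w0: "ww 0 = Some" by (rule ext) simp
      show ?thesis using \<open>i = 1\<close> by (simp add: T_def Y_def w0)
    next
      case (Suc n)
      hence ii: "i = Suc (Suc n)" using i by simp
      show ?thesis unfolding ii T_def Y_def using W[OF b0, of n] by simp
    qed
    finally show ?thesis .
  qed
  have R: "sum_mset (image_mset Lup (om (uop i (Some b)))) = T i + X i" for i
  proof (cases "ww (i - 1) b")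
    case None thus ?thesis by (simp add: uop_ww T_def X_def)
  next
    case (Some g)
    thus ?thesis by (simp add: uop_ww T_def X_def Lup_snoc)
  qed
  have Y1: "Y 1 = {#}" by (simp add: Y_def)
  have YX: "Y (Suc i) = X i" if i1: "1 \<le> i" for i
  proof -
    obtain n where n: "i = Suc n" using i1 by (cases i) auto
    show ?thesis
    proof (cases "ww n b")
      case None thus ?thesis by (simp add: Y_def X_def n)
    next
      case (Some g)
      note F = ww_facts[OF Some]
      have "Suc n \<in> set g \<longleftrightarrow> Suc n \<in> set b" using F by simp
      moreover have "n = 0 \<or> n \<in> set b" using F by auto
      ultimately show ?thesis using Some by (simp add: Y_def X_def n)
    qed
  qed
  have XN: "X (N - 1) = {#}"
  proof (cases "ww (N - 2) b")
    case None thus ?thesis by (simp add: X_def numeral_eq_Suc)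
  next
    case (Some g)
    have "N - 2 \<in> set b" using ww_facts[OF Some] N by auto
    hence "N - 2 \<le> sum_list b" using member_le_sum_list[of "N - 2" b] by simp
    thus ?thesis using N by simp
  qed
  have SY: "(\<Sum>i\<in>{1..<N}. Y i) = (\<Sum>i\<in>{1..<N}. X i)"
  proof -
    obtain M where M: "N = Suc M" using N by (cases N) auto
    have "(\<Sum>i\<in>{1..<N}. Y i) = (\<Sum>i\<in>{1..<M}. X i)" unfolding M
      by (rule shift_sum) (use Y1 YX in auto)
    also have "\<dots> = (\<Sum>i\<in>{1..<N}. X i)"
    proof -
      have "M \<ge> 1" using N M by simp
      hence "(\<Sum>i\<in>{1..<Suc M}. X i) = (\<Sum>i\<in>{1..<M}. X i) + X M" by simp
      thus ?thesis using XN M by simp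
    qed
    finally show ?thesis .
  qed
  have "sum_mset (image_mset (Ub N) (Lup b)) = (\<Sum>i\<in>{1..<N}. T i + Y i)"
    unfolding Ub_def sum_mset_image_sum using L by (intro sum.cong) auto
  also have "\<dots> = (\<Sum>i\<in>{1..<N}. T i) + (\<Sum>i\<in>{1..<N}. Y i)" by (rule sum.distrib)
  also have "\<dots> = (\<Sum>i\<in>{1..<N}. T i) + (\<Sum>i\<in>{1..<N}. X i)" using SY by simp
  also have "\<dots> = (\<Sum>i\<in>{1..<N}. T i + X i)" by (rule sum.distrib[symmetric])
  also have "\<dots> = sum_mset (image_mset Lup (Ub N b))"
    unfolding Ub_def using R by (simp add: sum_mset_image_Sum)
  finally show ?thesis .
qed

definition CC :: "nat \<Rightarrow> nat list set" where
  "CC n = {b. is_composition b \<and> sum_list b = n}"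

lemma length_le_sum: "is_composition b \<Longrightarrow> length b \<le> sum_list b"
  by (induction b) (auto simp: is_composition_def)

lemma finite_CC: "finite (CC n)"
proof -
  have "CC n \<subseteq> {xs. set xs \<subseteq> {0..n} \<and> length xs \<le> n}"
    using length_le_sum member_le_sum_list by (fastforce simp: CC_def)
  moreover have "finite {xs. set xs \<subseteq> {0..n} \<and> length xs \<le> n}"
    by (rule finite_lists_length_le) simp
  ultimately show ?thesis by (rule finite_subset)
qed

lemma finite_comp_le: "finite {x. is_composition x \<and> sum_list x \<le> n}"
proof -
  have "{x. is_composition x \<and> sum_list x \<le> n} = (\<Union>m\<in>{0..n}. CC m)" by (auto simp: CC_def)
  thus ?thesis using finite_CC by simp
qed

lemma ww_0: "ww k b = Some g \<Longrightarrow> 0 \<in> set b \<Longrightarrow> 0 \<in> set g"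
proof (induction k arbitrary: b)
  case 0 thus ?case by simp
next
  case (Suc k)
  then obtain g1 where g1: "dop (Suc k) (Some b) = Some g1" "ww k g1 = Some g"
    by (cases "dop (Suc k) (Some b)") auto
  have "0 \<in> set g1" using dop_facts[OF g1(1)] Suc.prems by auto
  thus ?case using Suc.IH[OF g1(2)] by simp
qed

lemma covers_facts:
  assumes "covers_r b a"
  shows "sum_list a = Suc (sum_list b)" "is_composition a \<Longrightarrow> is_composition b"
    "\<exists>i\<ge>1. uop i (Some b) = Some a"
proof -
  obtain i where i: "i \<ge> 1" "uop i (Some b) = Some a" using assms by (auto simp: covers_r_def)
  then obtain g where g: "ww (i - 1) b = Some g" "a = g @ [i]" by (auto simp: uop_ww)
  note F = ww_facts[OF g(1)]
  show "sum_list a = Suc (sum_list b)" using F g i by (simp; linarith)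
  show "is_composition a \<Longrightarrow> is_composition b"
  proof -
    assume ca: "is_composition a"
    have "0 \<notin> set b"
    proof
      assume "0 \<in> set b"
      hence "0 \<in> set a" using ww_0[OF g(1)] g(2) by simp
      thus False using ca by (auto simp: is_composition_def)
    qed
    thus ?thesis by (auto simp: is_composition_def intro: gr0I)
  qed
  show "\<exists>i\<ge>1. uop i (Some b) = Some a" using i by blast
qed

lemma chain_sum:
  assumes "cs \<in> chains_to a" "k < length cs"
  shows "sum_list (cs ! k) = k"
  using assms(2)
proof (induction k)
  case 0
  have "cs \<noteq> []" using assms(1) by (simp add: chains_to_def)
  hence "cs ! 0 = hd cs" by (simp add: hd_conv_nth)
  thus ?case using assms(1) by (simp add: chains_to_def)
next
  case (Suc k)
  have "covers_r (cs ! k) (cs ! Suc k)" using assms(1) Suc.prems by (simp add: chains_to_def)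
  thus ?case using covers_facts(1) Suc by simp
qed

lemma chain_comp:
  assumes "cs \<in> chains_to a" "is_composition a" "k < length cs"
  shows "is_composition (cs ! k)"
proof -
  have cs: "cs \<noteq> []" "last cs = a" using assms(1) by (auto simp: chains_to_def)
  have "\<forall>k. k < length cs \<longrightarrow> length cs - 1 - k = j \<longrightarrow> is_composition (cs ! k)" for j
  proof (induction j)
    case 0
    show ?case
    proof (intro allI impI)
      fix k assume "k < length cs" "length cs - 1 - k = 0"
      hence "k = length cs - 1" by simp
      thus "is_composition (cs ! k)" using cs assms(2) by (simp add: last_conv_nth)
    qed
  next
    case (Suc j)
    show ?case
    proof (intro allI impI)
      fix k assume k: "k < length cs" "length cs - 1 - k = Suc j"
      hence "Suc k < length cs" "length cs - 1 - Suc k = j" by auto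
      hence "is_composition (cs ! Suc k)" "covers_r (cs ! k) (cs ! Suc k)"
        using Suc.IH assms(1) by (auto simp: chains_to_def)
      thus "is_composition (cs ! k)" using covers_facts(2) by blast
    qed
  qed
  thus ?thesis using assms(3) by blast
qed

lemma chains_length:
  assumes "cs \<in> chains_to a" shows "length cs = Suc (sum_list a)"
proof -
  have "cs \<noteq> []" "last cs = a" using assms by (auto simp: chains_to_def)
  hence "cs ! (length cs - 1) = a" by (simp add: last_conv_nth)
  moreover have "sum_list (cs ! (length cs - 1)) = length cs - 1"
    using chain_sum[OF assms] \<open>cs \<noteq> []\<close> by simp
  ultimately show ?thesis using \<open>cs \<noteq> []\<close> by (cases cs) auto
qed

lemma finite_chains: "is_composition a \<Longrightarrow> finite (chains_to a)"
proof -
  assume a: "is_composition a"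
  let ?S = "{x. is_composition x \<and> sum_list x \<le> sum_list a}"
  have "chains_to a \<subseteq> {cs. set cs \<subseteq> ?S \<and> length cs = Suc (sum_list a)}"
  proof
    fix cs assume cs: "cs \<in> chains_to a"
    have "set cs \<subseteq> ?S"
    proof
      fix x assume "x \<in> set cs"
      then obtain k where k: "k < length cs" "x = cs ! k" by (auto simp: in_set_conv_nth)
      show "x \<in> ?S" using chain_comp[OF cs a k(1)] chain_sum[OF cs k(1)] chains_length[OF cs] k by simp
    qed
    thus "cs \<in> {cs. set cs \<subseteq> ?S \<and> length cs = Suc (sum_list a)}" using chains_length[OF cs] by simp
  qed
  moreover have "finite {cs. set cs \<subseteq> ?S \<and> length cs = Suc (sum_list a)}"
    by (rule finite_lists_length_eq) (rule finite_comp_le)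
  ultimately show ?thesis by (rule finite_subset)
qed

lemma chains_Nil: "chains_to [] = {[[]]}"
proof
  show "chains_to [] \<subseteq> {[[]]}"
  proof
    fix cs assume cs: "cs \<in> chains_to []"
    have "length cs = 1" using chains_length[OF cs] by simp
    then obtain x where "cs = [x]" by (cases cs) auto
    thus "cs \<in> {[[]]}" using cs by (simp add: chains_to_def)
  qed
  show "{[[]]} \<subseteq> chains_to []" by (simp add: chains_to_def)
qed

lemma chains_step:
  assumes "a \<noteq> []"
  shows "chains_to a = (\<Union>b\<in>{b. covers_r b a}. (\<lambda>cs. cs @ [a]) ` chains_to b)"
proof
  show "chains_to a \<subseteq> (\<Union>b\<in>{b. covers_r b a}. (\<lambda>cs. cs @ [a]) ` chains_to b)"
  proof
    fix cs assume cs: "cs \<in> chains_to a"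
    hence ne: "cs \<noteq> []" "hd cs = []" "last cs = a" by (auto simp: chains_to_def)
    have len: "length cs \<ge> 2"
    proof (rule ccontr)
      assume "\<not> length cs \<ge> 2"
      with ne obtain x where "cs = [x]" by (cases cs; cases "tl cs") auto
      thus False using ne assms by simp
    qed
    define cs' where "cs' = butlast cs"
    have cseq: "cs = cs' @ [a]" using ne unfolding cs'_def by (metis append_butlast_last_id)
    have lc: "length cs' = length cs - 1" unfolding cs'_def by simp
    have nth': "k < length cs' \<Longrightarrow> cs' ! k = cs ! k" for k unfolding cs'_def by (simp add: nth_butlast)
    have c'ne: "cs' \<noteq> []" using lc len by auto
    have "covers_r (cs ! (length cs - 2)) (cs ! Suc (length cs - 2))"
      using cs len by (simp add: chains_to_def)
    moreover have "cs ! Suc (length cs - 2) = a" using ne len by (simp add: last_conv_nth Suc_diff_Suc numeral_2_eq_2)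
    moreover have "cs ! (length cs - 2) = last cs'"
    proof -
      have "last cs' = cs' ! (length cs' - 1)" using c'ne by (simp add: last_conv_nth)
      also have "\<dots> = cs ! (length cs' - 1)" using nth' c'ne by simp
      also have "length cs' - 1 = length cs - 2" using lc by simp
      finally show ?thesis by simp
    qed
    ultimately have cov: "covers_r (last cs') a" by simp
    have hd': "hd cs' = []" using ne(2) c'ne cseq by (metis hd_append2)
    have cov': "covers_r (cs' ! k) (cs' ! Suc k)" if "Suc k < length cs'" for k
    proof -
      have "Suc k < length cs" using that lc by simp
      hence "covers_r (cs ! k) (cs ! Suc k)" using cs by (simp add: chains_to_def)
      thus ?thesis using nth'[of k] nth'[of "Suc k"] that by simp
    qed
    have "cs' \<in> chains_to (last cs')"
      unfolding chains_to_def using c'ne hd' cov' by blast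
    thus "cs \<in> (\<Union>b\<in>{b. covers_r b a}. (\<lambda>cs. cs @ [a]) ` chains_to b)" using cov cseq by blast
  qed
  show "(\<Union>b\<in>{b. covers_r b a}. (\<lambda>cs. cs @ [a]) ` chains_to b) \<subseteq> chains_to a"
  proof
    fix x assume "x \<in> (\<Union>b\<in>{b. covers_r b a}. (\<lambda>cs. cs @ [a]) ` chains_to b)"
    then obtain b cs where b: "covers_r b a" "cs \<in> chains_to b" "x = cs @ [a]" by auto
    hence c: "cs \<noteq> []" "hd cs = []" "last cs = b"
      "\<And>k. Suc k < length cs \<Longrightarrow> covers_r (cs ! k) (cs ! Suc k)" by (auto simp: chains_to_def)
    have "\<And>k. Suc k < length (cs @ [a]) \<Longrightarrow> covers_r ((cs @ [a]) ! k) ((cs @ [a]) ! Suc k)"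
    proof -
      fix k assume k: "Suc k < length (cs @ [a])"
      show "covers_r ((cs @ [a]) ! k) ((cs @ [a]) ! Suc k)"
      proof (cases "Suc k < length cs")
        case True thus ?thesis using c(4) by (simp add: nth_append)
      next
        case False
        hence "k = length cs - 1" using k by simp
        thus ?thesis using c b(1) by (simp add: nth_append last_conv_nth)
      qed
    qed
    thus "x \<in> chains_to a" using b(3) c by (simp add: chains_to_def)
  qed
qed

lemma cells_iff: "(x, y) \<in> cells a \<longleftrightarrow> x < length a \<and> y < a ! x"
  by (simp add: cells_def)

lemma finite_cells: "finite (cells a)"
proof -
  have "cells a \<subseteq> {0..<length a} \<times> {0..<sum_list a}"
    using elem_le_sum_list by (fastforce simp: cells_def)
  thus ?thesis by (rule finite_subset) simp
qed

lemma srct_bij: "\<tau> \<in> SRCTs a \<Longrightarrow> bij_betw \<tau> (cells a) {1..sum_list a}"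
  by (simp add: SRCTs_def is_SRCT_def)
lemma srct_val: "\<tau> \<in> SRCTs a \<Longrightarrow> x \<in> cells a \<Longrightarrow> 1 \<le> \<tau> x \<and> \<tau> x \<le> sum_list a"
  using srct_bij bij_betwE by fastforce
lemma srct_inj: "\<tau> \<in> SRCTs a \<Longrightarrow> x \<in> cells a \<Longrightarrow> y \<in> cells a \<Longrightarrow> \<tau> x = \<tau> y \<Longrightarrow> x = y"
  using srct_bij by (metis bij_betw_def inj_onD)
lemma srct_surj: "\<tau> \<in> SRCTs a \<Longrightarrow> 1 \<le> v \<Longrightarrow> v \<le> sum_list a \<Longrightarrow> \<exists>x\<in>cells a. \<tau> x = v"
  using srct_bij by (metis atLeastAtMost_iff bij_betw_def imageE)
lemma srct_zero: "\<tau> \<in> SRCTs a \<Longrightarrow> x \<notin> cells a \<Longrightarrow> \<tau> x = 0"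
  unfolding SRCTs_def by (cases x) auto
lemma srct_row: "\<tau> \<in> SRCTs a \<Longrightarrow> (r, c') \<in> cells a \<Longrightarrow> c < c' \<Longrightarrow> \<tau> (r, c') < \<tau> (r, c)"
  by (simp add: SRCTs_def is_SRCT_def)
lemma srct_col: "\<tau> \<in> SRCTs a \<Longrightarrow> r < s \<Longrightarrow> s < length a \<Longrightarrow> \<tau> (r, 0) < \<tau> (s, 0)"
  by (simp add: SRCTs_def is_SRCT_def)
lemma srct_tri: "\<tau> \<in> SRCTs a \<Longrightarrow> r < s \<Longrightarrow> (s, Suc c) \<in> cells a \<Longrightarrow> (r, c) \<in> cells a
   \<Longrightarrow> \<tau> (s, Suc c) < \<tau> (r, c) \<Longrightarrow> (r, Suc c) \<in> cells a \<and> \<tau> (s, Suc c) < \<tau> (r, Suc c)"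
  unfolding SRCTs_def is_SRCT_def by blast

lemma SRCTs_I:
  assumes "inj_on \<tau> (cells a)" "\<And>x. x \<in> cells a \<Longrightarrow> 1 \<le> \<tau> x \<and> \<tau> x \<le> sum_list a"
    "\<And>v. 1 \<le> v \<Longrightarrow> v \<le> sum_list a \<Longrightarrow> \<exists>x\<in>cells a. \<tau> x = v"
    "\<And>r c c'. (r, c') \<in> cells a \<Longrightarrow> c < c' \<Longrightarrow> \<tau> (r, c') < \<tau> (r, c)"
    "\<And>r s. r < s \<Longrightarrow> s < length a \<Longrightarrow> \<tau> (r, 0) < \<tau> (s, 0)"
    "\<And>r s c. r < s \<Longrightarrow> (s, Suc c) \<in> cells a \<Longrightarrow> (r, c) \<in> cells a
       \<Longrightarrow> \<tau> (s, Suc c) < \<tau> (r, c) \<Longrightarrow> (r, Suc c) \<in> cells a \<and> \<tau> (s, Suc c) < \<tau> (r, Suc c)"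
    "\<And>x. x \<notin> cells a \<Longrightarrow> \<tau> x = 0"
  shows "\<tau> \<in> SRCTs a"
proof -
  have "\<tau> ` cells a = {1..sum_list a}"
    using assms(2,3) by (auto simp: image_def) (metis)
  hence "bij_betw \<tau> (cells a) {1..sum_list a}" using assms(1) by (simp add: bij_betw_def)
  thus ?thesis using assms(4-7) unfolding SRCTs_def is_SRCT_def by blast
qed

definition Rem :: "nat list \<Rightarrow> nat set" where
  "Rem a = {r. r < length a \<and> ((r = 0 \<and> a ! 0 = 1) \<or> (2 \<le> a ! r \<and> a ! r - 1 \<notin> set (take r a)))}"

definition rem :: "nat \<Rightarrow> nat list \<Rightarrow> nat list" where
  "rem r a = (if a ! r = 1 then tl a else a[r := a ! r - 1])"

definition Sr :: "nat list \<Rightarrow> nat \<Rightarrow> (nat \<times> nat \<Rightarrow> nat) set" where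
  "Sr a r = {\<tau> \<in> SRCTs a. \<tau> (r, a ! r - 1) = 1}"

lemma one_cell:
  assumes t: "\<tau> \<in> SRCTs a" and a: "is_composition a" "a \<noteq> []"
  shows "\<exists>r\<in>Rem a. \<tau> (r, a ! r - 1) = 1"
proof -
  have pos: "\<And>i. i < length a \<Longrightarrow> 0 < a ! i" using a(1) by (auto simp: is_composition_def)
  have "1 \<le> sum_list a" using a pos[of 0] elem_le_sum_list[of 0 a] by (cases a) auto
  then obtain q where q: "q \<in> cells a" "\<tau> q = 1" using srct_surj[OF t, of 1] by auto
  obtain r c where rc: "q = (r, c)" by (cases q)
  have r: "r < length a" "c < a ! r" using q rc by (auto simp: cells_def)
  have c: "c = a ! r - 1"
  proof (rule ccontr)
    assume "c \<noteq> a ! r - 1"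
    hence "(r, Suc c) \<in> cells a" using r by (auto simp: cells_def)
    hence "\<tau> (r, Suc c) < \<tau> (r, c)" using srct_row[OF t] by blast
    moreover have "1 \<le> \<tau> (r, Suc c)" using srct_val[OF t \<open>(r, Suc c) \<in> cells a\<close>] by simp
    ultimately show False using q rc by simp
  qed
  have "r \<in> Rem a"
  proof (cases "a ! r = 1")
    case True
    have "r = 0"
    proof (rule ccontr)
      assume "r \<noteq> 0"
      hence "\<tau> (0, 0) < \<tau> (r, 0)" using srct_col[OF t] r by simp
      moreover have "(0, 0) \<in> cells a" using pos[of 0] a(2) by (simp add: cells_def)
      hence "1 \<le> \<tau> (0, 0)" using srct_val[OF t] by blast
      ultimately show False using q rc c True by simp
    qed
    thus ?thesis using True r by (simp add: Rem_def)
  next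
    case False
    hence two: "2 \<le> a ! r" using pos[OF r(1)] by simp
    have "a ! r - 1 \<notin> set (take r a)"
    proof
      assume "a ! r - 1 \<in> set (take r a)"
      then obtain r1 where r1: "r1 < r" "a ! r1 = a ! r - 1" using r
        by (auto simp: in_set_conv_nth)
      let ?c = "a ! r - 2"
      have s: "(r, Suc ?c) \<in> cells a" using r two by (simp add: cells_def)
      have sc: "Suc ?c = c" using c two by simp
      have r1c: "(r1, ?c) \<in> cells a" using r1 r two by (simp add: cells_def)
      have "\<tau> (r1, ?c) \<noteq> 1"
      proof
        assume "\<tau> (r1, ?c) = 1"
        hence "(r1, ?c) = (r, c)" using srct_inj[OF t r1c q(1)] q rc by simp
        thus False using r1 by simp
      qed
      hence "\<tau> (r, Suc ?c) < \<tau> (r1, ?c)" using srct_val[OF t r1c] q rc sc by simp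
      hence "(r1, Suc ?c) \<in> cells a" using srct_tri[OF t r1(1) s r1c] by blast
      thus False using r1 two by (simp add: cells_def; linarith)
    qed
    thus ?thesis using two r by (simp add: Rem_def)
  qed
  thus ?thesis using q rc c by blast
qed

lemma SRCTs_decomp:
  assumes "is_composition a" "a \<noteq> []"
  shows "SRCTs a = (\<Union>r\<in>Rem a. Sr a r)"
  using one_cell[OF _ assms] by (auto simp: Sr_def)

lemma Sr_disjoint:
  assumes "r \<in> Rem a" "r' \<in> Rem a" "r \<noteq> r'"
  shows "Sr a r \<inter> Sr a r' = {}"
proof -
  have p: "(r, a ! r - 1) \<in> cells a" "(r', a ! r' - 1) \<in> cells a"
    using assms by (auto simp: Rem_def cells_def)
  show ?thesis
  proof (rule ccontr)
    assume "Sr a r \<inter> Sr a r' \<noteq> {}"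
    then obtain \<tau> where "\<tau> \<in> Sr a r" "\<tau> \<in> Sr a r'" by blast
    hence "\<tau> \<in> SRCTs a" "\<tau> (r, a ! r - 1) = \<tau> (r', a ! r' - 1)" by (auto simp: Sr_def)
    hence "(r, a ! r - 1) = (r', a ! r' - 1)" using srct_inj p by blast
    thus False using assms by simp
  qed
qed

lemma card_Sr_A:
  assumes a: "is_composition a" and r: "r < length a" "2 \<le> a ! r" "a ! r - 1 \<notin> set (take r a)"
  shows "card (Sr a r) = card (SRCTs (a[r := a ! r - 1]))"
proof -
  define b where "b = a[r := a ! r - 1]"
  define p where "p = (r, a ! r - 1)"
  have lb: "length b = length a" by (simp add: b_def)
  have bn: "\<And>x. b ! x = (if x = r then a ! r - 1 else a ! x)" using r by (simp add: b_def nth_list_update)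
  have pos: "\<And>i. i < length a \<Longrightarrow> 0 < a ! i" using a by (auto simp: is_composition_def)
  have cb: "cells b = cells a - {p}"
    using r by (auto simp: cells_def p_def lb bn split: if_splits)
  have pa: "p \<in> cells a" using r by (simp add: cells_def p_def)
  have sb: "sum_list b = sum_list a - 1"
    using r by (simp add: b_def sum_list_update)
  have sa: "1 \<le> sum_list a" using elem_le_sum_list[OF r(1)] r by simp
  have col0: "\<And>x. x < length a \<Longrightarrow> (x, 0) \<in> cells b" using pos r by (auto simp: cells_def lb bn)
  define f where "f \<tau> = (\<lambda>x. if x \<in> cells b then \<tau> x - 1 else 0)" for \<tau> :: "nat \<times> nat \<Rightarrow> nat"
  define g where "g \<sigma> = (\<lambda>x. if x \<in> cells b then \<sigma> x + 1 else if x = p then 1 else 0)" for \<sigma> :: "nat \<times> nat \<Rightarrow> nat"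
  have fS: "f \<tau> \<in> SRCTs b" if t: "\<tau> \<in> Sr a r" for \<tau>
  proof -
    have t1: "\<tau> \<in> SRCTs a" and tp: "\<tau> p = 1" using t by (auto simp: Sr_def p_def)
    have ge2: "2 \<le> \<tau> x" if "x \<in> cells b" for x
    proof -
      have "x \<in> cells a" "x \<noteq> p" using that cb by auto
      hence "\<tau> x \<noteq> 1" using srct_inj[OF t1 \<open>x \<in> cells a\<close> pa] tp by auto
      thus ?thesis using srct_val[OF t1 \<open>x \<in> cells a\<close>] by simp
    qed
    have cba: "x \<in> cells b \<Longrightarrow> x \<in> cells a" for x using cb by auto
    show ?thesis
    proof (rule SRCTs_I)
      show "inj_on (f \<tau>) (cells b)"
      proof (rule inj_onI)
        fix x y assume xy: "x \<in> cells b" "y \<in> cells b" "f \<tau> x = f \<tau> y"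
        hence "\<tau> x = \<tau> y" using ge2[of x] ge2[of y] by (simp add: f_def)
        thus "x = y" using srct_inj[OF t1] xy cba by blast
      qed
      show "1 \<le> f \<tau> x \<and> f \<tau> x \<le> sum_list b" if "x \<in> cells b" for x
        using ge2[OF that] srct_val[OF t1 cba[OF that]] that by (simp add: f_def sb; linarith)
      show "\<exists>x\<in>cells b. f \<tau> x = v" if v: "1 \<le> v" "v \<le> sum_list b" for v
      proof -
        have "Suc v \<le> sum_list a" using v sb sa by linarith
        then obtain x where x: "x \<in> cells a" "\<tau> x = Suc v" using srct_surj[OF t1, of "Suc v"] by auto
        have "x \<noteq> p" using x tp v by auto
        hence "x \<in> cells b" using x cb by auto
        thus ?thesis using x by (intro bexI[of _ x]) (auto simp: f_def)
      qed
      show "f \<tau> (r', c') < f \<tau> (r', c)" if "(r', c') \<in> cells b" "c < c'" for r' c c'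
      proof -
        have "(r', c) \<in> cells b" using that by (auto simp: cells_def)
        thus ?thesis using srct_row[OF t1 cba[OF that(1)] that(2)] ge2[OF that(1)] that
          by (simp add: f_def)
      qed
      show "f \<tau> (r', 0) < f \<tau> (s, 0)" if "r' < s" "s < length b" for r' s
        using srct_col[OF t1 that(1)] that col0[of r'] col0[of s] ge2[of "(r', 0)"] ge2[of "(s,0)"] lb
        by (simp add: f_def)
      show "(r', Suc c) \<in> cells b \<and> f \<tau> (s, Suc c) < f \<tau> (r', Suc c)"
        if h: "r' < s" "(s, Suc c) \<in> cells b" "(r', c) \<in> cells b" "f \<tau> (s, Suc c) < f \<tau> (r', c)" for r' s c
      proof -
        have "\<tau> (s, Suc c) < \<tau> (r', c)" using h ge2[OF h(2)] ge2[OF h(3)] by (simp add: f_def)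
        hence T: "(r', Suc c) \<in> cells a \<and> \<tau> (s, Suc c) < \<tau> (r', Suc c)"
          using srct_tri[OF t1 h(1) cba[OF h(2)] cba[OF h(3)]] by blast
        have "(r', Suc c) \<noteq> p" using T tp ge2[OF h(2)] by auto
        hence "(r', Suc c) \<in> cells b" using T cb by auto
        thus ?thesis using T ge2[OF h(2)] h by (simp add: f_def; linarith)
      qed
      show "f \<tau> x = 0" if "x \<notin> cells b" for x using that by (simp add: f_def)
    qed
  qed
  have gS: "g \<sigma> \<in> Sr a r" if s: "\<sigma> \<in> SRCTs b" for \<sigma>
  proof -
    have pb: "p \<notin> cells b" using cb by auto
    have cab: "x \<in> cells a \<Longrightarrow> x \<noteq> p \<Longrightarrow> x \<in> cells b" for x using cb by auto
    have vb: "x \<in> cells b \<Longrightarrow> 1 \<le> \<sigma> x \<and> \<sigma> x \<le> sum_list b" for x using srct_val[OF s] by blast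
    have gb: "x \<in> cells b \<Longrightarrow> g \<sigma> x = \<sigma> x + 1" for x by (simp add: g_def)
    have gp: "g \<sigma> p = 1" using pb by (simp add: g_def)
    have "g \<sigma> \<in> SRCTs a"
    proof (rule SRCTs_I)
      show "inj_on (g \<sigma>) (cells a)"
      proof (rule inj_onI)
        fix x y assume xy: "x \<in> cells a" "y \<in> cells a" "g \<sigma> x = g \<sigma> y"
        show "x = y"
        proof (cases "x = p"; cases "y = p")
          assume "x \<noteq> p" "y \<noteq> p"
          hence xb: "x \<in> cells b" "y \<in> cells b" using xy cab by auto
          hence "\<sigma> x = \<sigma> y" using xy(3) gb by simp
          thus "x = y" using srct_inj[OF s xb] by blast
        next
          assume h: "x = p" "y \<noteq> p"
          hence "y \<in> cells b" using xy cab by auto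
          hence "g \<sigma> y = \<sigma> y + 1" "1 \<le> \<sigma> y" using gb vb by auto
          thus "x = y" using xy h gp by simp
        next
          assume h: "x \<noteq> p" "y = p"
          hence "x \<in> cells b" using xy cab by auto
          hence "g \<sigma> x = \<sigma> x + 1" "1 \<le> \<sigma> x" using gb vb by auto
          thus "x = y" using xy h gp by simp
        qed simp
      qed
      show "1 \<le> g \<sigma> x \<and> g \<sigma> x \<le> sum_list a" if "x \<in> cells a" for x
      proof (cases "x = p")
        case True thus ?thesis using gp sa by simp
      next
        case False
        hence "x \<in> cells b" using cab that by blast
        thus ?thesis using vb[of x] gb[of x] sb sa by auto
      qed
      show "\<exists>x\<in>cells a. g \<sigma> x = v" if vv: "1 \<le> v" "v \<le> sum_list a" for v
      proof (cases "v = 1")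
        case True thus ?thesis using pa gp by blast
      next
        case False
        have "1 \<le> v - 1" "v - 1 \<le> sum_list b" using vv sb False by auto
        then obtain x where x: "x \<in> cells b" "\<sigma> x = v - 1" using srct_surj[OF s, of "v - 1"] by auto
        thus ?thesis using gb cb False vv by (intro bexI[of _ x]) auto
      qed
      show "g \<sigma> (r', c') < g \<sigma> (r', c)" if h: "(r', c') \<in> cells a" "c < c'" for r' c c'
      proof (cases "(r', c') = p")
        case True
        hence "(r', c) \<in> cells b" using h r by (auto simp: p_def cells_def lb bn)
        thus ?thesis using True gp gb[of "(r', c)"] vb[of "(r', c)"] by simp
      next
        case False
        hence "(r', c') \<in> cells b" using cab h by blast
        moreover hence "(r', c) \<in> cells b" using h by (auto simp: cells_def)
        ultimately show ?thesis using srct_row[OF s] h gb by simp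
      qed
      show "g \<sigma> (r', 0) < g \<sigma> (s', 0)" if "r' < s'" "s' < length a" for r' s'
        using srct_col[OF s that(1)] that col0[of r'] col0[of s'] gb lb by simp
      show "(r', Suc c) \<in> cells a \<and> g \<sigma> (s', Suc c) < g \<sigma> (r', Suc c)"
        if h: "r' < s'" "(s', Suc c) \<in> cells a" "(r', c) \<in> cells a" "g \<sigma> (s', Suc c) < g \<sigma> (r', c)" for r' s' c
      proof (cases "(s', Suc c) = p")
        case True
        hence sc: "s' = r" "Suc c = a ! r - 1" by (auto simp: p_def)
        have "a ! r' \<noteq> a ! r - 1"
        proof
          assume "a ! r' = a ! r - 1"
          moreover have "r' < length a" using h(1) sc r by simp
          ultimately have "a ! r - 1 \<in> set (take r a)" using h(1) sc
            by (auto simp: in_set_conv_nth intro!: exI[of _ r'])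
          thus False using r by simp
        qed
        moreover have "c < a ! r'" using h(3) by (simp add: cells_def)
        ultimately have "Suc c < a ! r'" using sc by linarith
        hence A: "(r', Suc c) \<in> cells a" using h(3) by (simp add: cells_def)
        have "(r', Suc c) \<noteq> p" using h(1) sc by (simp add: p_def)
        hence "(r', Suc c) \<in> cells b" using cab A by blast
        thus ?thesis using A True gp gb[of "(r', Suc c)"] vb[of "(r', Suc c)"] by simp
      next
        case False
        hence sb': "(s', Suc c) \<in> cells b" using cab h by blast
        show ?thesis
        proof (cases "(r', c) = p")
          case True
          thus ?thesis using h(4) gp gb[OF sb'] by simp
        next
          case F2: False
          hence rb: "(r', c) \<in> cells b" using cab h by blast
          have "\<sigma> (s', Suc c) < \<sigma> (r', c)" using h(4) gb sb' rb by simp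
          hence "(r', Suc c) \<in> cells b \<and> \<sigma> (s', Suc c) < \<sigma> (r', Suc c)"
            using srct_tri[OF s h(1) sb' rb] by blast
          thus ?thesis using gb sb' cb by auto
        qed
      qed
      show "g \<sigma> x = 0" if "x \<notin> cells a" for x using that cb pa by (auto simp: g_def)
    qed
    thus ?thesis using gp by (simp add: Sr_def p_def)
  qed
  have fg: "f (g \<sigma>) = \<sigma>" if "\<sigma> \<in> SRCTs b" for \<sigma>
    using srct_zero[OF that] by (auto simp: f_def g_def)
  have gf: "g (f \<tau>) = \<tau>" if t: "\<tau> \<in> Sr a r" for \<tau>
  proof
    fix x
    have t1: "\<tau> \<in> SRCTs a" and tp: "\<tau> p = 1" using t by (auto simp: Sr_def p_def)
    show "g (f \<tau>) x = \<tau> x"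
    proof (cases "x \<in> cells b")
      case True
      hence "1 \<le> \<tau> x" using srct_val[OF t1] cb by blast
      thus ?thesis using True by (simp add: f_def g_def)
    next
      case False
      show ?thesis
      proof (cases "x = p")
        case True thus ?thesis using tp False by (simp add: f_def g_def)
      next
        case F2: False
        hence "x \<notin> cells a" using False cb by auto
        thus ?thesis using srct_zero[OF t1, of x] False F2 by (simp add: f_def g_def)
      qed
    qed
  qed
  have "bij_betw f (Sr a r) (SRCTs b)"
    by (rule bij_betw_byWitness[where f' = g]) (use fS gS fg gf in auto)
  thus ?thesis unfolding b_def by (rule bij_betw_same_card)
qed

lemma cells_Cons1: "(x, y) \<in> cells (1 # b) \<longleftrightarrow> (x = 0 \<and> y = 0) \<or> (x \<noteq> 0 \<and> (x - 1, y) \<in> cells b)"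
  by (cases x) (auto simp: cells_def)

lemma card_Sr_B:
  assumes a: "is_composition (1 # b)"
  shows "card (Sr (1 # b) 0) = card (SRCTs b)"
proof -
  let ?a = "1 # b"
  define p where "p = ((0::nat), (0::nat))"
  have pos: "\<And>i. i < length b \<Longrightarrow> 0 < b ! i" using a by (auto simp: is_composition_def)
  have pa: "p \<in> cells ?a" by (simp add: cells_def p_def)
  have sb: "sum_list b = sum_list ?a - 1" by simp
  have shift: "(Suc x, y) \<in> cells ?a \<longleftrightarrow> (x, y) \<in> cells b" for x y by (simp add: cells_def)
  have col0: "\<And>x. x < length b \<Longrightarrow> (x, 0) \<in> cells b" using pos by (auto simp: cells_def)
  define f where "f \<tau> = (\<lambda>q. if q \<in> cells b then \<tau> (Suc (fst q), snd q) - 1 else 0)"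
    for \<tau> :: "nat \<times> nat \<Rightarrow> nat"
  define g where "g \<sigma> = (\<lambda>q. if q = p then 1 else if fst q \<noteq> 0 \<and> (fst q - 1, snd q) \<in> cells b
      then \<sigma> (fst q - 1, snd q) + 1 else 0)" for \<sigma> :: "nat \<times> nat \<Rightarrow> nat"
  have fS: "f \<tau> \<in> SRCTs b" if t: "\<tau> \<in> Sr ?a 0" for \<tau>
  proof -
    have t1: "\<tau> \<in> SRCTs ?a" and tp: "\<tau> p = 1" using t by (auto simp: Sr_def p_def)
    have ge2: "2 \<le> \<tau> (Suc x, y)" if "(x, y) \<in> cells b" for x y
    proof -
      have c: "(Suc x, y) \<in> cells ?a" using that shift by blast
      have "(Suc x, y) \<noteq> p" by (simp add: p_def)
      hence "\<tau> (Suc x, y) \<noteq> 1" using srct_inj[OF t1 c pa] tp by auto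
      thus ?thesis using srct_val[OF t1 c] by simp
    qed
    have fv: "(x, y) \<in> cells b \<Longrightarrow> f \<tau> (x, y) = \<tau> (Suc x, y) - 1" for x y by (simp add: f_def)
    show ?thesis
    proof (rule SRCTs_I)
      show "inj_on (f \<tau>) (cells b)"
      proof (rule inj_onI)
        fix q q' assume xy: "q \<in> cells b" "q' \<in> cells b" "f \<tau> q = f \<tau> q'"
        obtain x y x' y' where qq: "q = (x, y)" "q' = (x', y')" by (cases q; cases q')
        have "\<tau> (Suc x, y) = \<tau> (Suc x', y')" using xy qq fv ge2[of x y] ge2[of x' y'] by simp
        hence "(Suc x, y) = (Suc x', y')" using srct_inj[OF t1] xy qq shift by blast
        thus "q = q'" using qq by simp
      qed
      show "1 \<le> f \<tau> q \<and> f \<tau> q \<le> sum_list b" if "q \<in> cells b" for q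
      proof -
        obtain x y where q: "q = (x, y)" by (cases q)
        have "\<tau> (Suc x, y) \<le> sum_list ?a" using srct_val[OF t1] shift that q by blast
        thus ?thesis using ge2[of x y] that q fv by (simp; linarith)
      qed
      show "\<exists>q\<in>cells b. f \<tau> q = v" if v: "1 \<le> v" "v \<le> sum_list b" for v
      proof -
        have "Suc v \<le> sum_list ?a" using v by simp
        then obtain q where q: "q \<in> cells ?a" "\<tau> q = Suc v" using srct_surj[OF t1, of "Suc v"] by auto
        obtain x y where xy: "q = (x, y)" by (cases q)
        have "q \<noteq> p" using q tp v by auto
        hence "x \<noteq> 0 \<and> (x - 1, y) \<in> cells b" using q xy cells_Cons1 p_def by auto
        moreover hence "Suc (x - 1) = x" by simp
        ultimately show ?thesis using q xy fv by (intro bexI[of _ "(x - 1, y)"]) auto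
      qed
      show "f \<tau> (r', c') < f \<tau> (r', c)" if h: "(r', c') \<in> cells b" "c < c'" for r' c c'
      proof -
        have "(r', c) \<in> cells b" using h by (auto simp: cells_def)
        moreover have "\<tau> (Suc r', c') < \<tau> (Suc r', c)" using srct_row[OF t1 _ h(2)] shift h(1) by blast
        ultimately show ?thesis using ge2[OF h(1)] h fv by simp
      qed
      show "f \<tau> (r', 0) < f \<tau> (s, 0)" if h: "r' < s" "s < length b" for r' s
      proof -
        have "\<tau> (Suc r', 0) < \<tau> (Suc s, 0)" using srct_col[OF t1, of "Suc r'" "Suc s"] h by simp
        thus ?thesis using col0[of r'] col0[of s] h ge2[of r' 0] fv by simp
      qed
      show "(r', Suc c) \<in> cells b \<and> f \<tau> (s, Suc c) < f \<tau> (r', Suc c)"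
        if h: "r' < s" "(s, Suc c) \<in> cells b" "(r', c) \<in> cells b" "f \<tau> (s, Suc c) < f \<tau> (r', c)" for r' s c
      proof -
        have "\<tau> (Suc s, Suc c) < \<tau> (Suc r', c)" using h ge2[OF h(2)] ge2[OF h(3)] fv by simp
        hence T: "(Suc r', Suc c) \<in> cells ?a \<and> \<tau> (Suc s, Suc c) < \<tau> (Suc r', Suc c)"
          using srct_tri[OF t1, of "Suc r'" "Suc s" c] h shift by blast
        hence "(r', Suc c) \<in> cells b" using shift by blast
        thus ?thesis using T ge2[OF h(2)] fv h(2) by (simp; linarith)
      qed
      show "f \<tau> q = 0" if "q \<notin> cells b" for q using that by (simp add: f_def)
    qed
  qed
  have gS: "g \<sigma> \<in> Sr ?a 0" if s: "\<sigma> \<in> SRCTs b" for \<sigma>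
  proof -
    have vb: "q \<in> cells b \<Longrightarrow> 1 \<le> \<sigma> q \<and> \<sigma> q \<le> sum_list b" for q using srct_val[OF s] by blast
    have gb: "(x, y) \<in> cells b \<Longrightarrow> g \<sigma> (Suc x, y) = \<sigma> (x, y) + 1" for x y by (simp add: g_def p_def)
    have gp: "g \<sigma> p = 1" by (simp add: g_def)
    have "g \<sigma> \<in> SRCTs ?a"
    proof (rule SRCTs_I)
      show "inj_on (g \<sigma>) (cells ?a)"
      proof (rule inj_onI)
        fix q q' assume xy: "q \<in> cells ?a" "q' \<in> cells ?a" "g \<sigma> q = g \<sigma> q'"
        obtain x y x' y' where qq: "q = (x, y)" "q' = (x', y')" by (cases q; cases q')
        show "q = q'"
        proof (cases "x = 0"; cases "x' = 0")
          assume "x = 0" "x' = 0" thus "q = q'" using xy qq cells_Cons1 by auto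
        next
          assume h: "x = 0" "x' \<noteq> 0"
          hence "q = p" "(x' - 1, y') \<in> cells b" using xy qq cells_Cons1 p_def by auto
          moreover have "g \<sigma> q' = \<sigma> (x' - 1, y') + 1" using h calculation qq by (simp add: g_def p_def)
          ultimately show "q = q'" using xy gp vb[of "(x' - 1, y')"] by auto
        next
          assume h: "x \<noteq> 0" "x' = 0"
          hence "q' = p" "(x - 1, y) \<in> cells b" using xy qq cells_Cons1 p_def by auto
          moreover have "g \<sigma> q = \<sigma> (x - 1, y) + 1" using h calculation qq by (simp add: g_def p_def)
          ultimately show "q = q'" using xy gp vb[of "(x - 1, y)"] by auto
        next
          assume h: "x \<noteq> 0" "x' \<noteq> 0"
          hence c: "(x - 1, y) \<in> cells b" "(x' - 1, y') \<in> cells b" using xy qq cells_Cons1 by auto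
          hence "\<sigma> (x - 1, y) = \<sigma> (x' - 1, y')" using xy qq h by (simp add: g_def p_def)
          hence "(x - 1, y) = (x' - 1, y')" using srct_inj[OF s c] by blast
          thus "q = q'" using qq h by auto
        qed
      qed
      show "1 \<le> g \<sigma> q \<and> g \<sigma> q \<le> sum_list ?a" if "q \<in> cells ?a" for q
      proof -
        obtain x y where q: "q = (x, y)" by (cases q)
        show ?thesis
        proof (cases "x = 0")
          case True thus ?thesis using that q cells_Cons1 gp p_def by auto
        next
          case False
          hence "(x - 1, y) \<in> cells b" using that q cells_Cons1 by auto
          thus ?thesis using vb False q by (simp add: g_def p_def)
        qed
      qed
      show "\<exists>q\<in>cells ?a. g \<sigma> q = v" if v: "1 \<le> v" "v \<le> sum_list ?a" for v
      proof (cases "v = 1")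
        case True thus ?thesis using pa gp by blast
      next
        case False
        hence "1 \<le> v - 1" "v - 1 \<le> sum_list b" using v by auto
        then obtain q where q: "q \<in> cells b" "\<sigma> q = v - 1" using srct_surj[OF s] by blast
        obtain x y where xy: "q = (x, y)" by (cases q)
        show ?thesis using q xy gb shift False v by (intro bexI[of _ "(Suc x, y)"]) auto
      qed
      show "g \<sigma> (r', c') < g \<sigma> (r', c)" if h: "(r', c') \<in> cells ?a" "c < c'" for r' c c'
      proof (cases r')
        case 0 thus ?thesis using h by (simp add: cells_def)
      next
        case (Suc x)
        hence c1: "(x, c') \<in> cells b" using h shift by blast
        hence "(x, c) \<in> cells b" using h by (auto simp: cells_def)
        thus ?thesis using srct_row[OF s c1 h(2)] gb c1 Suc by simp
      qed
      show "g \<sigma> (r', 0) < g \<sigma> (s', 0)" if h: "r' < s'" "s' < length ?a" for r' s'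
      proof -
        obtain y where y: "s' = Suc y" using h by (cases s') auto
        have yb: "(y, 0) \<in> cells b" using col0 h y by simp
        show ?thesis
        proof (cases r')
          case 0
          thus ?thesis using gp gb[OF yb] y p_def vb[OF yb] by simp
        next
          case (Suc x)
          hence "(x, 0) \<in> cells b" using col0 h y by simp
          thus ?thesis using srct_col[OF s, of x y] gb yb Suc y h by simp
        qed
      qed
      show "(r', Suc c) \<in> cells ?a \<and> g \<sigma> (s', Suc c) < g \<sigma> (r', Suc c)"
        if h: "r' < s'" "(s', Suc c) \<in> cells ?a" "(r', c) \<in> cells ?a" "g \<sigma> (s', Suc c) < g \<sigma> (r', c)" for r' s' c
      proof -
        obtain y where y: "s' = Suc y" using h by (cases s') auto
        have yb: "(y, Suc c) \<in> cells b" using h(2) y shift by blast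
        show ?thesis
        proof (cases r')
          case 0
          hence "c = 0" using h(3) by (simp add: cells_def)
          thus ?thesis using h(4) 0 gp gb[OF yb] y p_def vb[OF yb] by simp
        next
          case (Suc x)
          hence xb: "(x, c) \<in> cells b" using h(3) shift by blast
          have "\<sigma> (y, Suc c) < \<sigma> (x, c)" using h(4) gb[OF yb] gb[OF xb] y Suc by simp
          hence "(x, Suc c) \<in> cells b \<and> \<sigma> (y, Suc c) < \<sigma> (x, Suc c)"
            using srct_tri[OF s _ yb xb] h(1) Suc y by simp
          thus ?thesis using gb yb Suc y shift by simp
        qed
      qed
      show "g \<sigma> q = 0" if "q \<notin> cells ?a" for q
      proof -
        obtain x y where q: "q = (x, y)" by (cases q)
        show ?thesis using that q cells_Cons1[of x y b] by (auto simp: g_def p_def)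
      qed
    qed
    thus ?thesis using gp by (simp add: Sr_def p_def)
  qed
  have fg: "f (g \<sigma>) = \<sigma>" if "\<sigma> \<in> SRCTs b" for \<sigma>
  proof
    fix q :: "nat \<times> nat"
    obtain x y where q: "q = (x, y)" by (cases q)
    show "f (g \<sigma>) q = \<sigma> q"
      using srct_zero[OF that, of q] q by (auto simp: f_def g_def p_def)
  qed
  have gf: "g (f \<tau>) = \<tau>" if t: "\<tau> \<in> Sr ?a 0" for \<tau>
  proof
    fix q :: "nat \<times> nat"
    obtain x y where q: "q = (x, y)" by (cases q)
    have t1: "\<tau> \<in> SRCTs ?a" and tp: "\<tau> p = 1" using t by (auto simp: Sr_def p_def)
    show "g (f \<tau>) q = \<tau> q"
    proof (cases "q = p")
      case True thus ?thesis using tp by (simp add: g_def)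
    next
      case False
      show ?thesis
      proof (cases "x \<noteq> 0 \<and> (x - 1, y) \<in> cells b")
        case True
        hence "(x, y) \<in> cells ?a" using cells_Cons1 by blast
        hence "1 \<le> \<tau> (x, y)" using srct_val[OF t1] by blast
        thus ?thesis using True False q by (simp add: f_def g_def)
      next
        case F2: False
        hence "q \<notin> cells ?a" using False q cells_Cons1 p_def by auto
        thus ?thesis using srct_zero[OF t1] F2 False q by (auto simp: f_def g_def)
      qed
    qed
  qed
  have "bij_betw f (Sr ?a 0) (SRCTs b)"
    by (rule bij_betw_byWitness[where f' = g]) (use fS gS fg gf in auto)
  thus ?thesis by (rule bij_betw_same_card)
qed

lemma finite_SRCTs: "finite (SRCTs a)"
proof -
  have "SRCTs a \<subseteq> {f. \<forall>x. (x \<in> cells a \<longrightarrow> f x \<in> {1..sum_list a}) \<and> (x \<notin> cells a \<longrightarrow> f x = 0)}"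
    using srct_val srct_zero by fastforce
  moreover have "finite {f. \<forall>x. (x \<in> cells a \<longrightarrow> f x \<in> {1..sum_list a}) \<and> (x \<notin> cells a \<longrightarrow> f x = (0::nat))}"
    by (rule finite_set_of_finite_funs) (simp_all add: finite_cells)
  ultimately show ?thesis by (rule finite_subset)
qed

lemma Rem_cases:
  assumes "r \<in> Rem a"
  shows "(r = 0 \<and> a ! 0 = 1 \<and> a = 1 # tl a \<and> rem r a = tl a)
       \<or> (a ! r \<noteq> 1 \<and> 2 \<le> a ! r \<and> r < length a \<and> a ! r - 1 \<notin> set (take r a) \<and> rem r a = a[r := a ! r - 1])"
  using assms by (cases a) (auto simp: Rem_def rem_def)

lemma card_Sr:
  assumes a: "is_composition a" and r: "r \<in> Rem a"
  shows "card (Sr a r) = card (SRCTs (rem r a))"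
  using Rem_cases[OF r]
proof
  assume h: "r = 0 \<and> a ! 0 = 1 \<and> a = 1 # tl a \<and> rem r a = tl a"
  hence "is_composition (1 # tl a)" using a by simp
  from card_Sr_B[OF this] show ?thesis using h by metis
next
  assume h: "a ! r \<noteq> 1 \<and> 2 \<le> a ! r \<and> r < length a \<and> a ! r - 1 \<notin> set (take r a) \<and> rem r a = a[r := a ! r - 1]"
  thus ?thesis using card_Sr_A[OF a] by simp
qed

lemma rem_facts:
  assumes a: "is_composition a" and r: "r \<in> Rem a"
  shows "is_composition (rem r a) \<and> Suc (sum_list (rem r a)) = sum_list a"
  using Rem_cases[OF r]
proof
  assume h: "r = 0 \<and> a ! 0 = 1 \<and> a = 1 # tl a \<and> rem r a = tl a"
  hence "sum_list a = Suc (sum_list (tl a))" by (metis sum_list_simps(2) plus_1_eq_Suc)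
  thus ?thesis using a h by (cases a) (auto simp: is_composition_def)
next
  assume h: "a ! r \<noteq> 1 \<and> 2 \<le> a ! r \<and> r < length a \<and> a ! r - 1 \<notin> set (take r a) \<and> rem r a = a[r := a ! r - 1]"
  have "is_composition (a[r := a ! r - 1])" using a h
    by (auto simp: is_composition_def dest: set_update_subset_insert[THEN subsetD])
  moreover have "Suc (sum_list (a[r := a ! r - 1])) = sum_list a"
    using h sum_list_update[of r a "a ! r - 1"] elem_le_sum_list[of r a] by simp
  ultimately show ?thesis using h by simp
qed

lemma rem_inj:
  assumes "r \<in> Rem a" "r' \<in> Rem a" "rem r a = rem r' a"
  shows "r = r'"
proof (rule ccontr)
  assume ne: "r \<noteq> r'"
  have e: "rem r a ! r = rem r' a ! r" "length (rem r a) = length (rem r' a)" using assms(3) by simp_all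
  note c1 = Rem_cases[OF assms(1)] and c2 = Rem_cases[OF assms(2)]
  have len: "a \<noteq> []" using assms(1) by (auto simp: Rem_def)
  show False
  proof (cases "r = 0 \<and> a ! 0 = 1")
    case True
    hence "r' \<noteq> 0" using ne by simp
    hence h2: "rem r' a = a[r' := a ! r' - 1]" using c2 by auto
    have "rem r a = tl a" using c1 True by auto
    hence "length (rem r a) = length a - 1" by simp
    moreover have "length (rem r' a) = length a" using h2 by simp
    moreover have "0 < length a" using len by simp
    ultimately show False using e(2) by linarith
  next
    case False
    hence h1: "2 \<le> a ! r" "r < length a" "rem r a = a[r := a ! r - 1]" using c1 by auto
    show False
    proof (cases "r' = 0 \<and> a ! 0 = 1")
      case True
      have "rem r' a = tl a" using c2 True by auto
      thus False using e(2) h1 len by simp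
    next
      case F2: False
      hence h2: "rem r' a = a[r' := a ! r' - 1]" using c2 by auto
      show False using e(1) h1 h2 ne by (simp add: nth_list_update)
    qed
  qed
qed

lemma Lup_alt: "Lup b = mset ((1 # b) # map (\<lambda>r. b[r := Suc (b!r)])
       (filter (\<lambda>r. b!r \<notin> set (take r b)) [0..<length b]))"
  by (simp add: Lup_def)

lemma count_Lup_le: "count (Lup b) a \<le> 1"
proof -
  let ?L = "(1 # b) # map (\<lambda>r. b[r := Suc (b!r)]) (filter (\<lambda>r. b!r \<notin> set (take r b)) [0..<length b])"
  have "inj_on (\<lambda>r. b[r := Suc (b!r)]) {r. r < length b}"
  proof (rule inj_onI)
    fix r r' assume h: "r \<in> {r. r < length b}" "r' \<in> {r. r < length b}" "b[r := Suc (b!r)] = b[r' := Suc (b!r')]"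
    hence "b[r := Suc (b!r)] ! r = b[r' := Suc (b!r')] ! r" by simp
    thus "r = r'" using h(1,2) by (auto simp: nth_list_update split: if_splits)
  qed
  hence "distinct (map (\<lambda>r. b[r := Suc (b!r)]) (filter (\<lambda>r. b!r \<notin> set (take r b)) [0..<length b]))"
    by (auto simp: distinct_map intro: inj_on_subset)
  moreover have "1 # b \<notin> set (map (\<lambda>r. b[r := Suc (b!r)]) (filter (\<lambda>r. b!r \<notin> set (take r b)) [0..<length b]))"
    by (auto dest: arg_cong[where f=length])
  ultimately have "distinct ?L" by simp
  thus ?thesis unfolding Lup_alt using distinct_count_atmost_1 by (metis le_refl zero_le_one)
qed

lemma mem_Lup_iff:
  assumes b: "is_composition b"
  shows "a \<in># Lup b \<longleftrightarrow> (\<exists>r\<in>Rem a. rem r a = b)"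
proof
  assume "a \<in># Lup b"
  hence "a = 1 # b \<or> (\<exists>r<length b. b!r \<notin> set (take r b) \<and> a = b[r := Suc (b!r)])"
    by (auto simp: Lup_def)
  thus "\<exists>r\<in>Rem a. rem r a = b"
  proof
    assume "a = 1 # b" thus ?thesis by (intro bexI[of _ 0]) (auto simp: Rem_def rem_def)
  next
    assume "\<exists>r<length b. b!r \<notin> set (take r b) \<and> a = b[r := Suc (b!r)]"
    then obtain r where r: "r < length b" "b!r \<notin> set (take r b)" "a = b[r := Suc (b!r)]" by blast
    have "0 < b ! r" using b r(1) by (auto simp: is_composition_def)
    hence "r \<in> Rem a" using r by (auto simp: Rem_def take_update_cancel)
    moreover have "rem r a = b" using r \<open>0 < b ! r\<close> by (simp add: rem_def)
    ultimately show ?thesis by blast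
  qed
next
  assume "\<exists>r\<in>Rem a. rem r a = b"
  then obtain r where r: "r \<in> Rem a" "rem r a = b" by blast
  show "a \<in># Lup b"
    using Rem_cases[OF r(1)]
  proof
    assume "r = 0 \<and> a ! 0 = 1 \<and> a = 1 # tl a \<and> rem r a = tl a"
    hence "a = 1 # b" using r(2) by auto
    thus ?thesis by (simp add: Lup_def)
  next
    assume h: "a ! r \<noteq> 1 \<and> 2 \<le> a ! r \<and> r < length a \<and> a ! r - 1 \<notin> set (take r a) \<and> rem r a = a[r := a ! r - 1]"
    hence bb: "b = a[r := a ! r - 1]" using r(2) by simp
    have "r < length b" "b ! r \<notin> set (take r b)" using h bb by (simp_all add: take_update_cancel)
    moreover have "a = b[r := Suc (b ! r)]" using h bb by simp
    ultimately show ?thesis by (force simp: Lup_def)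
  qed
qed

lemma uop_bound: "uop i (Some b) = Some a \<Longrightarrow> 1 \<le> i \<Longrightarrow> i \<le> sum_list b + 1 \<and> last a = i"
proof -
  assume u: "uop i (Some b) = Some a" and i: "1 \<le> i"
  then obtain g where g: "ww (i - 1) b = Some g" "a = g @ [i]" by (auto simp: uop_ww)
  have "i \<le> sum_list b + 1"
  proof (cases "i = 1")
    case False
    hence "i - 1 \<in> set b" using ww_facts[OF g(1)] i by auto
    hence "i - 1 \<le> sum_list b" using member_le_sum_list[of "i - 1" b] by simp
    thus ?thesis by simp
  qed simp
  thus ?thesis using g by simp
qed

lemma count_om: "count (om x) a = (if x = Some a then 1 else 0)"
  by (cases x) auto

lemma count_Ub:
  assumes N: "sum_list b + 2 \<le> N"
  shows "count (Ub N b) a = (if covers_r b a then 1 else 0)"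
proof -
  have c: "count (Ub N b) a = (\<Sum>i\<in>{1..<N}. if uop i (Some b) = Some a then 1 else 0)"
    unfolding Ub_def count_sum count_om ..
  show ?thesis
  proof (cases "covers_r b a")
    case True
    then obtain i0 where i0: "1 \<le> i0" "uop i0 (Some b) = Some a" by (auto simp: covers_r_def)
    have l: "i0 \<le> sum_list b + 1" "last a = i0" using uop_bound[OF i0(2) i0(1)] by auto
    have "(\<Sum>i\<in>{1..<N}. if uop i (Some b) = Some a then 1 else (0::nat))
        = (\<Sum>i\<in>{1..<N}. if i = i0 then 1 else 0)"
    proof (rule sum.cong)
      fix i assume "i \<in> {1..<N}"
      hence i1: "1 \<le> i" by simp
      have "uop i (Some b) = Some a \<longleftrightarrow> i = i0"
      proof
        assume u: "uop i (Some b) = Some a"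
        show "i = i0" using uop_bound[OF u i1] l(2) by simp
      next
        assume "i = i0" thus "uop i (Some b) = Some a" using i0 by simp
      qed
      thus "(if uop i (Some b) = Some a then 1 else (0::nat)) = (if i = i0 then 1 else 0)"
        by simp
    qed simp
    also have "\<dots> = 1" using l i0 N by simp
    finally show ?thesis using c True by simp
  next
    case False
    have "(\<Sum>i\<in>{1..<N}. if uop i (Some b) = Some a then 1 else (0::nat)) = 0"
      using False by (auto simp: covers_r_def intro!: sum.neutral)
    thus ?thesis using c False by simp
  qed
qed

lemma CC_iff: "b \<in> CC n \<longleftrightarrow> is_composition b \<and> sum_list b = n" by (simp add: CC_def)

lemma chains_rec:
  assumes a: "a \<in> CC (Suc n)"
  shows "card (chains_to a) = (\<Sum>b\<in>CC n. card (chains_to b) * (if covers_r b a then 1 else 0))"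
proof -
  have ac: "is_composition a" "sum_list a = Suc n" using a by (auto simp: CC_def)
  have ne: "a \<noteq> []" using ac by auto
  let ?P = "{b. covers_r b a}"
  have P: "?P = {b \<in> CC n. covers_r b a}" using covers_facts ac by (auto simp: CC_def)
  have finP: "finite ?P" unfolding P using finite_CC by simp
  have compP: "b \<in> ?P \<Longrightarrow> is_composition b" for b using covers_facts(2) ac by blast
  have "card (chains_to a) = card (\<Union>b\<in>?P. (\<lambda>cs. cs @ [a]) ` chains_to b)"
    using chains_step[OF ne] by simp
  also have "\<dots> = (\<Sum>b\<in>?P. card ((\<lambda>cs. cs @ [a]) ` chains_to b))"
  proof (rule card_UN_disjoint[OF finP])
    show "\<forall>b\<in>?P. finite ((\<lambda>cs. cs @ [a]) ` chains_to b)" using finite_chains compP by blast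
    show "\<forall>b\<in>?P. \<forall>b'\<in>?P. b \<noteq> b' \<longrightarrow> ((\<lambda>cs. cs @ [a]) ` chains_to b) \<inter> ((\<lambda>cs. cs @ [a]) ` chains_to b') = {}"
      by (auto simp: chains_to_def)
  qed
  also have "\<dots> = (\<Sum>b\<in>?P. card (chains_to b))"
    by (rule sum.cong) (auto intro!: card_image simp: inj_on_def)
  also have "\<dots> = (\<Sum>b\<in>CC n. if covers_r b a then card (chains_to b) else 0)"
    unfolding P using finite_CC by (rule sum.inter_filter)
  finally show ?thesis by (simp add: if_distrib cong: if_cong)
qed

lemma SRCTs_Nil: "SRCTs [] = {\<lambda>_. 0}"
proof
  have e: "cells [] = {}" by (simp add: cells_def)
  show "SRCTs [] \<subseteq> {\<lambda>_. 0}" using srct_zero e by fastforce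
  show "{\<lambda>_. 0} \<subseteq> SRCTs []"
    by (auto intro!: SRCTs_I simp: e)
qed

lemma SRCT_rec:
  assumes a: "a \<in> CC (Suc n)"
  shows "card (SRCTs a) = (\<Sum>b\<in>CC n. card (SRCTs b) * count (Lup b) a)"
proof -
  have ac: "is_composition a" "sum_list a = Suc n" using a by (auto simp: CC_def)
  have ne: "a \<noteq> []" using ac by auto
  have finR: "finite (Rem a)" by (rule finite_subset[of _ "{..<length a}"]) (auto simp: Rem_def)
  have "card (SRCTs a) = card (\<Union>r\<in>Rem a. Sr a r)" using SRCTs_decomp[OF ac(1) ne] by simp
  also have "\<dots> = (\<Sum>r\<in>Rem a. card (Sr a r))"
  proof (rule card_UN_disjoint[OF finR])
    show "\<forall>r\<in>Rem a. finite (Sr a r)"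
      using finite_SRCTs by (auto simp: Sr_def)
    show "\<forall>r\<in>Rem a. \<forall>r'\<in>Rem a. r \<noteq> r' \<longrightarrow> Sr a r \<inter> Sr a r' = {}"
      using Sr_disjoint by blast
  qed
  also have "\<dots> = (\<Sum>r\<in>Rem a. card (SRCTs (rem r a)))"
    using card_Sr[OF ac(1)] by simp
  also have "\<dots> = (\<Sum>b\<in>(\<lambda>r. rem r a) ` Rem a. card (SRCTs b))"
  proof -
    have inj: "inj_on (\<lambda>r. rem r a) (Rem a)" by (rule inj_onI) (rule rem_inj)
    show ?thesis using sum.reindex[OF inj, of "\<lambda>b. card (SRCTs b)"] by simp
  qed
  also have "\<dots> = (\<Sum>b\<in>CC n. card (SRCTs b) * count (Lup b) a)"
  proof -
    have sub: "(\<lambda>r. rem r a) ` Rem a \<subseteq> CC n" using rem_facts[OF ac(1)] ac by (auto simp: CC_def)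
    have cnt: "count (Lup b) a = (if b \<in> (\<lambda>r. rem r a) ` Rem a then 1 else 0)" if "b \<in> CC n" for b
    proof -
      have bc: "is_composition b" using that by (simp add: CC_def)
      have le: "count (Lup b) a \<le> 1" by (rule count_Lup_le)
      have iff: "0 < count (Lup b) a \<longleftrightarrow> b \<in> (\<lambda>r. rem r a) ` Rem a"
        using mem_Lup_iff[OF bc, of a] by auto
      show ?thesis
      proof (cases "b \<in> (\<lambda>r. rem r a) ` Rem a")
        case True
        hence "0 < count (Lup b) a" using iff by blast
        hence "count (Lup b) a = 1" using le by linarith
        thus ?thesis using True by simp
      next
        case False
        hence "\<not> 0 < count (Lup b) a" using iff by blast
        hence "count (Lup b) a = 0" by linarith
        thus ?thesis using False by simp
      qed
    qed
    have "(\<Sum>b\<in>CC n. card (SRCTs b) * count (Lup b) a)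
        = (\<Sum>b\<in>CC n. if b \<in> (\<lambda>r. rem r a) ` Rem a then card (SRCTs b) else 0)"
      by (rule sum.cong) (auto simp: cnt)
    also have "\<dots> = (\<Sum>b\<in>{b\<in>CC n. b \<in> (\<lambda>r. rem r a) ` Rem a}. card (SRCTs b))"
      using finite_CC by (rule sum.inter_filter[symmetric])
    also have "{b\<in>CC n. b \<in> (\<lambda>r. rem r a) ` Rem a} = (\<lambda>r. rem r a) ` Rem a" using sub by blast
    finally show ?thesis by simp
  qed
  finally show ?thesis .
qed

lemma count_sum_mset_image:
  "count (sum_mset (image_mset f M)) a = sum_mset (image_mset (\<lambda>y. count (f y) a) M)"
  by (induction M) auto

lemma sum_mset_over:
  fixes f :: "'a \<Rightarrow> nat"
  assumes "finite S"
  shows "set_mset M \<subseteq> S \<Longrightarrow> sum_mset (image_mset f M) = (\<Sum>y\<in>S. count M y * f y)"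
proof (induction M)
  case empty thus ?case by simp
next
  case (add x M)
  have xS: "x \<in> S" using add.prems by simp
  have "sum_mset (image_mset f (add_mset x M)) = f x + (\<Sum>y\<in>S. count M y * f y)"
    using add by simp
  also have "\<dots> = (\<Sum>y\<in>S. (if y = x then f y else 0)) + (\<Sum>y\<in>S. count M y * f y)"
    using xS assms by (simp add: sum.delta')
  also have "\<dots> = (\<Sum>y\<in>S. count (add_mset x M) y * f y)"
    by (subst sum.distrib[symmetric]) (rule sum.cong, auto)
  finally show ?case .
qed

lemma in_sum_mset_set: "finite I \<Longrightarrow> x \<in># (\<Sum>i\<in>I. M i) \<Longrightarrow> \<exists>i\<in>I. x \<in># M i"
  by (induction I rule: finite_induct) auto

lemma om_mem: "x \<in># om y \<Longrightarrow> y = Some x"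
  by (cases y) auto

lemma Lup_sub:
  assumes b: "is_composition b"
  shows "set_mset (Lup b) \<subseteq> CC (Suc (sum_list b))"
proof
  fix x assume "x \<in># Lup b"
  hence "x = 1 # b \<or> (\<exists>r<length b. x = b[r := Suc (b!r)])" by (auto simp: Lup_def)
  thus "x \<in> CC (Suc (sum_list b))"
  proof
    assume "x = 1 # b" thus ?thesis using b by (simp add: CC_def is_composition_def)
  next
    assume "\<exists>r<length b. x = b[r := Suc (b!r)]"
    then obtain r where r: "r < length b" "x = b[r := Suc (b!r)]" by blast
    have "is_composition x" using b r
      by (auto simp: is_composition_def dest: set_update_subset_insert[THEN subsetD])
    moreover have "sum_list x = Suc (sum_list b)"
      using r sum_list_update[of r b "Suc (b!r)"] elem_le_sum_list[of r b] by simp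
    ultimately show ?thesis by (simp add: CC_def)
  qed
qed

lemma Ub_sub:
  assumes b: "is_composition b"
  shows "set_mset (Ub N b) \<subseteq> CC (Suc (sum_list b))"
proof
  fix x assume "x \<in># Ub N b"
  hence "x \<in># (\<Sum>i\<in>{1..<N}. om (uop i (Some b)))" unfolding Ub_def .
  from in_sum_mset_set[OF finite_atLeastLessThan this]
  obtain i where i: "i \<in> {1..<N}" "x \<in># om (uop i (Some b))" by blast
  have u: "uop i (Some b) = Some x" using om_mem[OF i(2)] .
  then obtain g where g: "ww (i - 1) b = Some g" "x = g @ [i]" by (auto simp: uop_ww)
  have "0 \<notin> set b" using b by (auto simp: is_composition_def)
  hence "0 \<notin> set g" using ww_facts[OF g(1)] by blast
  hence "is_composition x" using g i by (auto simp: is_composition_def intro: gr0I)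
  moreover have "sum_list x = Suc (sum_list b)" using covers_facts(1)[of b x] u i by (auto simp: covers_r_def)
  ultimately show "x \<in> CC (Suc (sum_list b))" by (simp add: CC_def)
qed

lemma comm_count:
  assumes b: "b' \<in> CC m"
  shows "(\<Sum>y\<in>CC (Suc m). count (Lup b') y * count (Ub (m + 3) y) a)
       = (\<Sum>a'\<in>CC (Suc m). count (Ub (m + 3) b') a' * count (Lup a') a)"
proof -
  have bc: "is_composition b'" "sum_list b' = m" using b by (auto simp: CC_def)
  have b0: "0 \<notin> set b'" using bc by (auto simp: is_composition_def)
  have C: "sum_mset (image_mset (Ub (m + 3)) (Lup b')) = sum_mset (image_mset Lup (Ub (m + 3) b'))"
    using comm[OF b0] bc by simp
  have "(\<Sum>y\<in>CC (Suc m). count (Lup b') y * count (Ub (m + 3) y) a)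
      = sum_mset (image_mset (\<lambda>y. count (Ub (m + 3) y) a) (Lup b'))"
    using sum_mset_over[OF finite_CC Lup_sub[OF bc(1)]] bc by simp
  also have "\<dots> = count (sum_mset (image_mset (Ub (m + 3)) (Lup b'))) a"
    by (simp add: count_sum_mset_image)
  also have "\<dots> = count (sum_mset (image_mset Lup (Ub (m + 3) b'))) a" using C by simp
  also have "\<dots> = sum_mset (image_mset (\<lambda>y. count (Lup y) a) (Ub (m + 3) b'))"
    by (simp add: count_sum_mset_image)
  also have "\<dots> = (\<Sum>a'\<in>CC (Suc m). count (Ub (m + 3) b') a' * count (Lup a') a)"
    using sum_mset_over[OF finite_CC Ub_sub[OF bc(1)]] bc by simp
  finally show ?thesis .
qed

lemma CC0: "CC 0 = {[]}"
proof -
  have "is_composition b \<Longrightarrow> sum_list b = 0 \<Longrightarrow> b = []" for b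
    by (cases b) (auto simp: is_composition_def)
  thus ?thesis by (auto simp: CC_def is_composition_def)
qed

lemma CC1: "a \<in> CC 1 \<Longrightarrow> a = [1]"
proof -
  assume a: "a \<in> CC 1"
  then obtain x xs where a': "a = x # xs" by (cases a) (auto simp: CC_def)
  have h: "0 < x" "\<forall>p\<in>set xs. 0 < p" "x + sum_list xs = 1" using a a' by (auto simp: CC_def is_composition_def)
  hence "sum_list xs = 0" "x = 1" by linarith+
  hence "xs \<in> CC 0" using h by (simp add: CC_def is_composition_def)
  thus ?thesis using a' CC0 \<open>x = 1\<close> by auto
qed

lemma sum_swap_mult:
  fixes f :: "'b \<Rightarrow> nat"
  shows "(\<Sum>y\<in>Y. (\<Sum>b\<in>B. f b * g b y) * h y) = (\<Sum>b\<in>B. f b * (\<Sum>y\<in>Y. g b y * h y))"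
proof -
  have "(\<Sum>y\<in>Y. (\<Sum>b\<in>B. f b * g b y) * h y) = (\<Sum>y\<in>Y. \<Sum>b\<in>B. f b * (g b y * h y))"
    by (simp add: sum_distrib_right mult.assoc)
  also have "\<dots> = (\<Sum>b\<in>B. \<Sum>y\<in>Y. f b * (g b y * h y))" by (rule sum.swap)
  also have "\<dots> = (\<Sum>b\<in>B. f b * (\<Sum>y\<in>Y. g b y * h y))" by (simp add: sum_distrib_left)
  finally show ?thesis .
qed

lemma FL:
  "a \<in> CC (Suc n) \<Longrightarrow> card (chains_to a) = (\<Sum>b\<in>CC n. card (chains_to b) * count (Lup b) a)"
proof (induction n arbitrary: a)
  case 0
  hence a: "a = [1]" using CC1 by simp
  have cov: "covers_r [] [1]" by (auto simp: covers_r_def uop_ww intro!: exI[of _ 1])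
  have "card (chains_to a) = card (chains_to []) * (if covers_r [] a then 1 else 0)"
    using chains_rec[OF 0] CC0 by simp
  thus ?case using a cov CC0 by (simp add: Lup_Nil)
next
  case (Suc m)
  let ?F = "\<lambda>x. card (chains_to x)"
  let ?N = "m + 3"
  have "?F a = (\<Sum>y\<in>CC (Suc m). ?F y * (if covers_r y a then 1 else 0))" by (rule chains_rec[OF Suc.prems])
  also have "\<dots> = (\<Sum>y\<in>CC (Suc m). ?F y * count (Ub ?N y) a)"
    by (rule sum.cong) (auto simp: count_Ub CC_def)
  also have "\<dots> = (\<Sum>y\<in>CC (Suc m). (\<Sum>b\<in>CC m. ?F b * count (Lup b) y) * count (Ub ?N y) a)"
    using Suc.IH by simp
  also have "\<dots> = (\<Sum>b\<in>CC m. ?F b * (\<Sum>y\<in>CC (Suc m). count (Lup b) y * count (Ub ?N y) a))"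
    by (rule sum_swap_mult)
  also have "\<dots> = (\<Sum>b\<in>CC m. ?F b * (\<Sum>a'\<in>CC (Suc m). count (Ub ?N b) a' * count (Lup a') a))"
    by (rule sum.cong) (simp_all add: comm_count)
  also have "\<dots> = (\<Sum>a'\<in>CC (Suc m). (\<Sum>b\<in>CC m. ?F b * count (Ub ?N b) a') * count (Lup a') a)"
    by (rule sum_swap_mult[symmetric])
  also have "\<dots> = (\<Sum>a'\<in>CC (Suc m). ?F a' * count (Lup a') a)"
  proof (rule sum.cong)
    fix a' assume a': "a' \<in> CC (Suc m)"
    have "(\<Sum>b\<in>CC m. ?F b * count (Ub ?N b) a') = (\<Sum>b\<in>CC m. ?F b * (if covers_r b a' then 1 else 0))"
      by (rule sum.cong) (auto simp: count_Ub CC_def)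
    also have "\<dots> = ?F a'" using chains_rec[OF a'] by simp
    finally show "(\<Sum>b\<in>CC m. ?F b * count (Ub ?N b) a') * count (Lup a') a = ?F a' * count (Lup a') a"
      by simp
  qed simp
  finally show ?case .
qed

lemma FG: "a \<in> CC n \<Longrightarrow> card (chains_to a) = card (SRCTs a)"
proof (induction n arbitrary: a rule: less_induct)
  case (less n)
  show ?case
  proof (cases n)
    case 0
    hence "a = []" using less.prems CC0 by simp
    thus ?thesis by (simp add: chains_Nil SRCTs_Nil)
  next
    case (Suc m)
    have "card (chains_to a) = (\<Sum>b\<in>CC m. card (chains_to b) * count (Lup b) a)"
      using FL less.prems Suc by simp
    also have "\<dots> = (\<Sum>b\<in>CC m. card (SRCTs b) * count (Lup b) a)"
    proof (rule sum.cong)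
      fix b assume "b \<in> CC m"
      thus "card (chains_to b) * count (Lup b) a = card (SRCTs b) * count (Lup b) a"
        using less.IH[of m b] Suc by simp
    qed simp
    also have "\<dots> = card (SRCTs a)" using SRCT_rec less.prems Suc by simp
    finally show ?thesis .
  qed
qed

theorem theorem8p5:
  assumes "is_composition \<alpha>"
  shows "card (chains_to \<alpha>) = card (SRCTs \<alpha>)"
  using FG[of \<alpha> "sum_list \<alpha>"] assms by (simp add: CC_def)

end
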